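(* Let $S$ be a finite $p$-group and $\mathcal{A}$ a divisible $S$-algebra with an $(S,S)$-invariant $\mathcal{O}$-basis $Y\subseteq\mathcal{A}^\times$. Then $Y$ is $\mathfrak{F}_S(\mathcal{A})$-stable: for every $P\le S$ and every $\varphi\in\mathrm{Hom}_{\mathfrak{F}_S(\mathcal{A})}(P,S)$, ${}^\varphi_PY_S\cong{}_PY_S$ as $(P,S)$-bisets.
   Context: $\mathcal{O}$ is a complete local noetherian domain with maximal ideal $\mathfrak{m}$ and algebraically closed residue field of characteristic $p$. An interior $S$-algebra is an $\mathcal{O}$-free finite-rank $\mathcal{O}$-algebra $\mathcal{A}$ with a group homomorphism $S\to\mathcal{A}^\times$; $S\times S$ acts by $(s,t)a=sat^{-1}$. It is bifree if it has an $\mathcal{O}$-basis $Y$ with $sY=Y=Ys$ for $s\in S$ ($(S,S)$-invariant basis) on which left and right actions are free. For $U\le S\times S$, $\mathcal{A}(U)=\mathcal{A}^U/(\mathfrak{m}\mathcal{A}^U+\sum_{V<U}\mathrm{tr}_V^U\mathcal{A}^V)$; for injective $\varphi:P\to S$, $\mathcal{A}(\varphi)=\mathcal{A}(\Delta(\varphi,P))$, $\Delta(\varphi,P)=\{(\varphi(p),p)\}$. $\mathfrak{F}_S(\mathcal{A})$ has objects the subgroups of $S$ and $\mathrm{Hom}(P,Q)=\{\varphi:P\to Q$ injective$:\mathcal{A}(\varphi)\ne0\}$. A bifree $S$-algebra is divisible if $\mathfrak{F}_S(\mathcal{A})$ contains all inclusions, is closed under composition, and every morphism is an inclusion composed with a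 group isomorphism onto its image that is an isomorphism in $\mathfrak{F}_S(\mathcal{A})$. ${}_PY_S$ is $Y$ with left action restricted to $P$; ${}^\varphi_PY_S$ is $Y$ with action $p\odot y\odot s=\varphi(p)ys$. *)

theory Defs
  imports "HOL-Algebra.Coset" "HOL-Computational_Algebra.Primes"
begin

text \<open>The ring O is the whole type 'o (an integral domain); m is a set of elements of 'o.\<close>

definition is_ideal :: "'o::comm_ring_1 set \<Rightarrow> bool" where
  "is_ideal I \<longleftrightarrow> 0 \<in> I \<and> (\<forall>x\<in>I. \<forall>y\<in>I. x + y \<in> I) \<and> (\<forall>r. \<forall>x\<in>I. r * x \<in> I)"

definition ideal_gen :: "'o::comm_ring_1 set \<Rightarrow> 'o set" where
  "ideal_gen F = {x. \<exists>(n::nat) r g. (\<forall>i<n. g i \<in> F) \<and> x = (\<Sum>i<n. r i * g i)}"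

definition noetherian_ring :: "'o::comm_ring_1 itself \<Rightarrow> bool" where
  "noetherian_ring _ \<longleftrightarrow> (\<forall>I::'o set. is_ideal I \<longrightarrow> (\<exists>F. finite F \<and> F \<subseteq> I \<and> I = ideal_gen F))"

definition maximal_ideal :: "'o::comm_ring_1 set \<Rightarrow> bool" where
  "maximal_ideal M \<longleftrightarrow> is_ideal M \<and> 1 \<notin> M \<and>
     (\<forall>J. is_ideal J \<and> M \<subseteq> J \<longrightarrow> J = M \<or> J = UNIV)"

definition local_ring_max :: "'o::comm_ring_1 set \<Rightarrow> bool" where
  "local_ring_max M \<longleftrightarrow> maximal_ideal M \<and> (\<forall>J. maximal_ideal J \<longrightarrow> J = M)"

fun ideal_pow :: "'o::comm_ring_1 set \<Rightarrow> nat \<Rightarrow> 'o set" where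
  "ideal_pow M 0 = UNIV"
| "ideal_pow M (Suc n) = ideal_gen {x * y | x y. x \<in> M \<and> y \<in> ideal_pow M n}"

definition adically_complete :: "'o::comm_ring_1 set \<Rightarrow> bool" where
  "adically_complete M \<longleftrightarrow> (\<Inter>n. ideal_pow M n) = {0} \<and>
     (\<forall>x::nat \<Rightarrow> 'o. (\<forall>n. x (Suc n) - x n \<in> ideal_pow M n) \<longrightarrow>
        (\<exists>l. \<forall>n. l - x n \<in> ideal_pow M n))"

definition residue_alg_closed :: "'o::comm_ring_1 set \<Rightarrow> bool" where
  "residue_alg_closed M \<longleftrightarrow> (\<forall>n::nat. \<forall>a::nat \<Rightarrow> 'o. n \<ge> 1 \<longrightarrow>
      (\<exists>x. x ^ n + (\<Sum>i<n. a i * x ^ i) \<in> M))"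

definition residue_char :: "'o::comm_ring_1 set \<Rightarrow> nat \<Rightarrow> bool" where
  "residue_char M p \<longleftrightarrow> (of_nat p :: 'o) \<in> M \<and> (\<forall>k. 0 < k \<and> k < p \<longrightarrow> (of_nat k :: 'o) \<notin> M)"

definition standing_O :: "'o::idom set \<Rightarrow> nat \<Rightarrow> bool" where
  "standing_O M p \<longleftrightarrow> noetherian_ring TYPE('o) \<and> local_ring_max M \<and> adically_complete M
     \<and> residue_alg_closed M \<and> residue_char M p"

text \<open>The algebra A is the whole type 'a (a ring); iota : O \<rightarrow> Z(A) is the structure map,
  the O-module structure being r . a = iota r * a.\<close>

definition O_algebra :: "('o::comm_ring_1 \<Rightarrow> 'a::ring_1) \<Rightarrow> bool" where
  "O_algebra \<iota> \<longleftrightarrow> \<iota> 1 = 1 \<and> (\<forall>x y. \<iota> (x + y) = \<iota> x + \<iota> y) \<and> (\<forall>x y. \<iota> (x * y) = \<iota> x * \<iota> y)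
     \<and> (\<forall>r a. \<iota> r * a = a * \<iota> r)"

definition O_basis :: "('o::comm_ring_1 \<Rightarrow> 'a::ring_1) \<Rightarrow> 'a set \<Rightarrow> bool" where
  "O_basis \<iota> Y \<longleftrightarrow> finite Y \<and>
     (\<forall>a. \<exists>!c. (\<forall>y. y \<notin> Y \<longrightarrow> c y = 0) \<and> a = (\<Sum>y\<in>Y. \<iota> (c y) * y))"

definition unit_of :: "'a::ring_1 \<Rightarrow> bool" where
  "unit_of y \<longleftrightarrow> (\<exists>z. y * z = 1 \<and> z * y = 1)"

definition interior_alg :: "('g, 'b) monoid_scheme \<Rightarrow> ('o::comm_ring_1 \<Rightarrow> 'a::ring_1) \<Rightarrow> ('g \<Rightarrow> 'a) \<Rightarrow> bool" where
  "interior_alg S \<iota> \<sigma> \<longleftrightarrow> O_algebra \<iota> \<and> (\<exists>Y. O_basis \<iota> Y) \<and> \<sigma> \<one>\<^bsub>S\<^esub> = 1 \<and>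
     (\<forall>s\<in>carrier S. \<forall>t\<in>carrier S. \<sigma> (s \<otimes>\<^bsub>S\<^esub> t) = \<sigma> s * \<sigma> t) \<and>
     (\<forall>s\<in>carrier S. unit_of (\<sigma> s))"

definition SS_invariant :: "('g, 'b) monoid_scheme \<Rightarrow> ('g \<Rightarrow> 'a::ring_1) \<Rightarrow> 'a set \<Rightarrow> bool" where
  "SS_invariant S \<sigma> Y \<longleftrightarrow> (\<forall>s\<in>carrier S. (\<lambda>y. \<sigma> s * y) ` Y = Y \<and> (\<lambda>y. y * \<sigma> s) ` Y = Y)"

definition bifree :: "('g, 'b) monoid_scheme \<Rightarrow> ('o::comm_ring_1 \<Rightarrow> 'a::ring_1) \<Rightarrow> ('g \<Rightarrow> 'a) \<Rightarrow> bool" where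
  "bifree S \<iota> \<sigma> \<longleftrightarrow> (\<exists>Y. O_basis \<iota> Y \<and> SS_invariant S \<sigma> Y \<and>
     (\<forall>s\<in>carrier S. \<forall>y\<in>Y. \<sigma> s * y = y \<longrightarrow> s = \<one>\<^bsub>S\<^esub>) \<and>
     (\<forall>s\<in>carrier S. \<forall>y\<in>Y. y * \<sigma> s = y \<longrightarrow> s = \<one>\<^bsub>S\<^esub>))"

definition bact :: "('g, 'b) monoid_scheme \<Rightarrow> ('g \<Rightarrow> 'a::ring_1) \<Rightarrow> 'g \<times> 'g \<Rightarrow> 'a \<Rightarrow> 'a" where
  "bact S \<sigma> u a = \<sigma> (fst u) * a * \<sigma> (inv\<^bsub>S\<^esub> (snd u))"

definition fixed :: "('g, 'b) monoid_scheme \<Rightarrow> ('g \<Rightarrow> 'a::ring_1) \<Rightarrow> ('g \<times> 'g) set \<Rightarrow> 'a set" where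
  "fixed S \<sigma> U = {a. \<forall>u\<in>U. bact S \<sigma> u a = a}"

definition trace :: "('g, 'b) monoid_scheme \<Rightarrow> ('g \<Rightarrow> 'a::ring_1) \<Rightarrow> ('g \<times> 'g) set \<Rightarrow> ('g \<times> 'g) set \<Rightarrow> 'a \<Rightarrow> 'a" where
  "trace S \<sigma> V U a = (\<Sum>C\<in>{u <#\<^bsub>S \<times>\<times> S\<^esub> V | u. u \<in> U}. bact S \<sigma> (SOME u. u \<in> C) a)"

definition mfixed :: "'o::comm_ring_1 set \<Rightarrow> ('o \<Rightarrow> 'a::ring_1) \<Rightarrow> ('g, 'b) monoid_scheme \<Rightarrow> ('g \<Rightarrow> 'a) \<Rightarrow> ('g \<times> 'g) set \<Rightarrow> 'a set" where
  "mfixed M \<iota> S \<sigma> U = {a. \<exists>(n::nat) r b. (\<forall>i<n. r i \<in> M \<and> b i \<in> fixed S \<sigma> U) \<and> a = (\<Sum>i<n. \<iota> (r i) * b i)}"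

definition brauer_kernel :: "'o::comm_ring_1 set \<Rightarrow> ('o \<Rightarrow> 'a::ring_1) \<Rightarrow> ('g, 'b) monoid_scheme \<Rightarrow> ('g \<Rightarrow> 'a) \<Rightarrow> ('g \<times> 'g) set \<Rightarrow> 'a set" where
  "brauer_kernel M \<iota> S \<sigma> U = {x + (\<Sum>i<n. trace S \<sigma> (V i) U (b i)) | x (n::nat) V b.
      x \<in> mfixed M \<iota> S \<sigma> U \<and>
      (\<forall>i<n. subgroup (V i) (S \<times>\<times> S) \<and> V i \<subset> U \<and> b i \<in> fixed S \<sigma> (V i))}"

definition brauer_nonzero :: "'o::comm_ring_1 set \<Rightarrow> ('o \<Rightarrow> 'a::ring_1) \<Rightarrow> ('g, 'b) monoid_scheme \<Rightarrow> ('g \<Rightarrow> 'a) \<Rightarrow> ('g \<times> 'g) set \<Rightarrow> bool" where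
  "brauer_nonzero M \<iota> S \<sigma> U \<longleftrightarrow> \<not> fixed S \<sigma> U \<subseteq> brauer_kernel M \<iota> S \<sigma> U"

definition Delta :: "('g \<Rightarrow> 'g) \<Rightarrow> 'g set \<Rightarrow> ('g \<times> 'g) set" where
  "Delta \<phi> P = {(\<phi> x, x) | x. x \<in> P}"

definition inj_hom_into :: "('g, 'b) monoid_scheme \<Rightarrow> 'g set \<Rightarrow> 'g set \<Rightarrow> ('g \<Rightarrow> 'g) \<Rightarrow> bool" where
  "inj_hom_into S P Q \<phi> \<longleftrightarrow> \<phi> ` P \<subseteq> Q \<and> inj_on \<phi> P \<and>
     (\<forall>x\<in>P. \<forall>y\<in>P. \<phi> (x \<otimes>\<^bsub>S\<^esub> y) = \<phi> x \<otimes>\<^bsub>S\<^esub> \<phi> y)"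

definition FHom :: "'o::comm_ring_1 set \<Rightarrow> ('o \<Rightarrow> 'a::ring_1) \<Rightarrow> ('g, 'b) monoid_scheme \<Rightarrow> ('g \<Rightarrow> 'a) \<Rightarrow> 'g set \<Rightarrow> 'g set \<Rightarrow> ('g \<Rightarrow> 'g) set" where
  "FHom M \<iota> S \<sigma> P Q = {\<phi>. inj_hom_into S P Q \<phi> \<and> brauer_nonzero M \<iota> S \<sigma> (Delta \<phi> P)}"

definition divisible_alg :: "'o::comm_ring_1 set \<Rightarrow> ('o \<Rightarrow> 'a::ring_1) \<Rightarrow> ('g, 'b) monoid_scheme \<Rightarrow> ('g \<Rightarrow> 'a) \<Rightarrow> bool" where
  "divisible_alg M \<iota> S \<sigma> \<longleftrightarrow> interior_alg S \<iota> \<sigma> \<and> bifree S \<iota> \<sigma> \<and>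
     (\<forall>P Q. subgroup P S \<and> subgroup Q S \<and> P \<subseteq> Q \<longrightarrow> id \<in> FHom M \<iota> S \<sigma> P Q) \<and>
     (\<forall>P Q R \<phi> \<psi>. subgroup P S \<and> subgroup Q S \<and> subgroup R S \<and>
        \<phi> \<in> FHom M \<iota> S \<sigma> P Q \<and> \<psi> \<in> FHom M \<iota> S \<sigma> Q R \<longrightarrow> \<psi> \<circ> \<phi> \<in> FHom M \<iota> S \<sigma> P R) \<and>
     (\<forall>P Q \<phi>. subgroup P S \<and> subgroup Q S \<and> \<phi> \<in> FHom M \<iota> S \<sigma> P Q \<longrightarrow>
        \<phi> \<in> FHom M \<iota> S \<sigma> P (\<phi> ` P) \<and>
        (\<exists>\<chi>. \<chi> \<in> FHom M \<iota> S \<sigma> (\<phi> ` P) P \<and> (\<forall>x\<in>P. \<chi> (\<phi> x) = x) \<and> (\<forall>y\<in>\<phi> ` P. \<phi> (\<chi> y) = y)))"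

definition twisted_biset_iso :: "('g, 'b) monoid_scheme \<Rightarrow> ('g \<Rightarrow> 'a::ring_1) \<Rightarrow> 'a set \<Rightarrow> 'g set \<Rightarrow> ('g \<Rightarrow> 'g) \<Rightarrow> bool" where
  "twisted_biset_iso S \<sigma> Y P \<phi> \<longleftrightarrow> (\<exists>f. bij_betw f Y Y \<and>
     (\<forall>x\<in>P. \<forall>s\<in>carrier S. \<forall>y\<in>Y. f (\<sigma> (\<phi> x) * y * \<sigma> s) = \<sigma> x * f y * \<sigma> s))"

end

theory Submission
  imports Defs "Jordan_Normal_Form.Determinant"
begin


lemma ideal_neg: "is_ideal M \<Longrightarrow> x \<in> M \<Longrightarrow> - x \<in> M"
  unfolding is_ideal_def by (metis mult_minus1)

lemma ideal_add: "is_ideal M \<Longrightarrow> x \<in> M \<Longrightarrow> y \<in> M \<Longrightarrow> x + y \<in> M"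
  unfolding is_ideal_def by blast

lemma ideal_diff: "is_ideal M \<Longrightarrow> x \<in> M \<Longrightarrow> y \<in> M \<Longrightarrow> x - y \<in> M"
  using ideal_add[of M x "-y"] ideal_neg[of M y] by simp

lemma ideal_mult: "is_ideal M \<Longrightarrow> x \<in> M \<Longrightarrow> r * x \<in> M"
  unfolding is_ideal_def by blast

lemma ideal_mult2: "is_ideal M \<Longrightarrow> x \<in> M \<Longrightarrow> x * r \<in> M"
  unfolding is_ideal_def by (metis mult.commute)

lemma ideal_zero: "is_ideal M \<Longrightarrow> 0 \<in> M"
  unfolding is_ideal_def by blast

lemma ideal_sum: "is_ideal M \<Longrightarrow> (\<And>x. x \<in> A \<Longrightarrow> f x \<in> M) \<Longrightarrow> sum f A \<in> M"
  by (induction A rule: infinite_finite_induct) (auto intro: ideal_zero ideal_add)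

lemma ideal_sum_diff: "is_ideal M \<Longrightarrow> (\<And>x. x \<in> A \<Longrightarrow> f x - g x \<in> M) \<Longrightarrow> sum f A - sum g A \<in> M"
  using ideal_sum[of M A "\<lambda>x. f x - g x"] by (simp add: sum_subtractf)

lemma ideal_prod_diff:
  assumes I: "is_ideal M"
  shows "(\<And>x. x \<in> A \<Longrightarrow> f x - g x \<in> M) \<Longrightarrow> prod f A - prod g A \<in> (M :: 'o::comm_ring_1 set)"
proof (induction A rule: infinite_finite_induct)
  case (infinite A) then show ?case using ideal_zero[OF I] by simp
next
  case empty then show ?case using ideal_zero[OF I] by simp
next
  case (insert x F)
  have "prod f (insert x F) - prod g (insert x F) = f x * (prod f F - prod g F) + (f x - g x) * prod g F"
    using insert by (simp add: algebra_simps)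
  moreover have "f x * (prod f F - prod g F) \<in> M" using insert I by (auto intro: ideal_mult)
  moreover have "(f x - g x) * prod g F \<in> M" using insert I by (auto intro: ideal_mult2)
  ultimately show ?case using I ideal_add by metis
qed

lemma det_cong:
  assumes I: "is_ideal M" and C: "C \<in> carrier_mat n n" and D: "D \<in> carrier_mat n n"
    and h: "\<And>i j. i < n \<Longrightarrow> j < n \<Longrightarrow> C $$ (i,j) - D $$ (i,j) \<in> (M :: 'o::comm_ring_1 set)"
  shows "det C - det D \<in> M"
proof -
  have "det C = (\<Sum>p | p permutes {0..<n}. of_int (sign p) * (\<Prod>i = 0..<n. C $$ (i, p i)))"
    using C by (simp add: det_def)
  moreover have "det D = (\<Sum>p | p permutes {0..<n}. of_int (sign p) * (\<Prod>i = 0..<n. D $$ (i, p i)))"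
    using D by (simp add: det_def)
  moreover have "(\<Sum>p | p permutes {0..<n}. of_int (sign p) * (\<Prod>i = 0..<n. C $$ (i, p i)))
     - (\<Sum>p | p permutes {0..<n}. of_int (sign p) * (\<Prod>i = 0..<n. D $$ (i, p i))) \<in> M"
  proof (rule ideal_sum_diff[OF I])
    fix p assume "p \<in> {p. p permutes {0..<n}}"
    then have pp: "\<And>i. i < n \<Longrightarrow> p i < n" by (auto simp: permutes_in_image)
    have "(\<Prod>i = 0..<n. C $$ (i, p i)) - (\<Prod>i = 0..<n. D $$ (i, p i)) \<in> M"
      by (rule ideal_prod_diff[OF I]) (use h pp in auto)
    then show "of_int (sign p) * (\<Prod>i = 0..<n. C $$ (i, p i)) - of_int (sign p) * (\<Prod>i = 0..<n. D $$ (i, p i)) \<in> M"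
      using ideal_mult[OF I] by (metis right_diff_distrib)
  qed
  ultimately show ?thesis by simp
qed

lemma rank_lemma:
  fixes M :: "'o::comm_ring_1 set" and P Q :: "nat \<Rightarrow> nat \<Rightarrow> 'o"
  assumes I: "is_ideal M" and one: "1 \<notin> M"
    and h: "\<And>i k. i < n \<Longrightarrow> k < n \<Longrightarrow> (\<Sum>j<m. P i j * Q j k) - (if i = k then 1 else 0) \<in> M"
  shows "n \<le> m"
proof (rule ccontr)
  assume "\<not> n \<le> m"
  then have mn: "m < n" by simp
  define A where "A = mat n n (\<lambda>(i,j). if j < m then P i j else 0)"
  define B where "B = mat n n (\<lambda>(j,k). if j < m then Q j k else 0)"
  have A: "A \<in> carrier_mat n n" and B: "B \<in> carrier_mat n n" by (auto simp: A_def B_def)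
  have AB: "A * B \<in> carrier_mat n n" using A B by simp
  have ent: "(A * B) $$ (i,k) = (\<Sum>j<m. P i j * Q j k)" if "i < n" "k < n" for i k
  proof -
    have "(A * B) $$ (i,k) = (\<Sum>j = 0..<n. A $$ (i,j) * B $$ (j,k))"
      using that A B by (simp add: scalar_prod_def)
    also have "\<dots> = (\<Sum>j = 0..<n. if j < m then P i j * Q j k else 0)"
      using that by (intro sum.cong) (auto simp: A_def B_def)
    also have "\<dots> = (\<Sum>j \<in> {0..<n} \<inter> {j. j < m}. P i j * Q j k)"
      by (simp add: sum.inter_restrict)
    also have "{0..<n} \<inter> {j. j < m} = {..<m}" using mn by auto
    finally show ?thesis .
  qed
  have "det B = 0"
  proof -
    have "(\<Prod>i = 0..<n. B $$ (i, p i)) = 0" if "p permutes {0..<n}" for p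
    proof -
      have "n - 1 \<in> {0..<n}" "p (n - 1) < n" using mn that by (auto simp: permutes_in_image)
      moreover have "B $$ (n - 1, p (n - 1)) = 0" using mn \<open>p (n - 1) < n\<close> by (simp add: B_def)
      ultimately show ?thesis by (metis finite_atLeastLessThan prod_zero)
    qed
    then show ?thesis using B by (simp add: det_def)
  qed
  then have "det (A * B) = 0" using det_mult[OF A B] by simp
  moreover have "det (A * B) - det (1\<^sub>m n) \<in> M"
    by (rule det_cong[OF I AB]) (use ent h in auto)
  ultimately have "- 1 \<in> M" by simp
  then show False using ideal_neg[OF I] one by fastforce
qed



locale gact =
  fixes G :: "('u, 'c) monoid_scheme" and K :: "'u set" and act :: "'u \<Rightarrow> 'x \<Rightarrow> 'x"
  assumes grp: "group G" and subK: "subgroup K G"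
    and act_one: "\<And>x. act \<one>\<^bsub>G\<^esub> x = x"
    and act_mult: "\<And>u v x. u \<in> K \<Longrightarrow> v \<in> K \<Longrightarrow> act (u \<otimes>\<^bsub>G\<^esub> v) x = act u (act v x)"
begin

definition stab :: "'x \<Rightarrow> 'u set" where "stab x = {u \<in> K. act u x = x}"
definition orb :: "'x \<Rightarrow> 'x set" where "orb x = (\<lambda>u. act u x) ` K"
definition fixp :: "'u set \<Rightarrow> 'x set \<Rightarrow> 'x set" where "fixp H X = {x \<in> X. \<forall>h\<in>H. act h x = x}"

lemma K_inv: "u \<in> K \<Longrightarrow> inv\<^bsub>G\<^esub> u \<in> K" using subK by (simp add: subgroup.m_inv_closed)
lemma K_one: "\<one>\<^bsub>G\<^esub> \<in> K" using subK by (simp add: subgroup.one_closed)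
lemma K_mult: "u \<in> K \<Longrightarrow> v \<in> K \<Longrightarrow> u \<otimes>\<^bsub>G\<^esub> v \<in> K" using subK by (simp add: subgroup.m_closed)
lemma K_car: "u \<in> K \<Longrightarrow> u \<in> carrier G" using subK by (meson subgroup.mem_carrier)

lemma inv_act1: "u \<in> K \<Longrightarrow> act (inv\<^bsub>G\<^esub> u) (act u x) = x"
  using act_mult[of "inv\<^bsub>G\<^esub> u" u x] K_inv K_car grp act_one by (metis group.l_inv)
lemma inv_act2: "u \<in> K \<Longrightarrow> act u (act (inv\<^bsub>G\<^esub> u) x) = x"
  using act_mult[of u "inv\<^bsub>G\<^esub> u" x] K_inv K_car grp act_one by (metis group.r_inv)

lemma x_in_orb: "x \<in> orb x" unfolding orb_def using K_one act_one by (metis image_eqI)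

lemma orb_closed: "z \<in> orb x \<Longrightarrow> u \<in> K \<Longrightarrow> act u z \<in> orb x"
proof -
  assume z: "z \<in> orb x" and u: "u \<in> K"
  then obtain v where v: "v \<in> K" "z = act v x" by (auto simp: orb_def)
  then have "act u z = act (u \<otimes>\<^bsub>G\<^esub> v) x" using act_mult[OF u v(1)] by simp
  then show ?thesis using K_mult[OF u v(1)] by (auto simp: orb_def)
qed

lemma orb_eq: "z \<in> orb y \<Longrightarrow> orb z = orb y"
proof -
  assume z: "z \<in> orb y"
  then obtain v where v: "v \<in> K" "z = act v y" by (auto simp: orb_def)
  have "orb z \<subseteq> orb y" using orb_closed[OF z] by (auto simp: orb_def)
  moreover have "y \<in> orb z" using orb_closed[OF x_in_orb[of z] K_inv[OF v(1)]] inv_act1[OF v(1)] v(2) by simp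
  then have "orb y \<subseteq> orb z" using orb_closed by (auto simp: orb_def)
  ultimately show ?thesis by blast
qed

lemma orb_compl_closed: "z \<notin> orb x \<Longrightarrow> u \<in> K \<Longrightarrow> act u z \<notin> orb x"
  using orb_closed[of "act u z" x "inv\<^bsub>G\<^esub> u"] inv_act1 K_inv by auto

lemma same_stab_act:
  assumes st: "stab x = stab x'" and u: "u \<in> K" and v: "v \<in> K" and e: "act u x = act v x"
  shows "act u x' = act v x'"
proof -
  have "act (inv\<^bsub>G\<^esub> v \<otimes>\<^bsub>G\<^esub> u) x = x"
    using act_mult[OF K_inv[OF v] u] e inv_act1[OF v] by simp
  then have "inv\<^bsub>G\<^esub> v \<otimes>\<^bsub>G\<^esub> u \<in> stab x'" using st K_mult K_inv u v by (auto simp: stab_def)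
  then have "act (inv\<^bsub>G\<^esub> v) (act u x') = x'"
    using act_mult[OF K_inv[OF v] u] by (simp add: stab_def)
  then show ?thesis using inv_act2[OF v, of "act u x'"] by metis
qed

lemma orbit_iso:
  assumes st: "stab x = stab x'"
  shows "\<exists>h. bij_betw h (orb x) (orb x') \<and> (\<forall>u\<in>K. \<forall>z\<in>orb x. h (act u z) = act u (h z))"
proof -
  define h where "h z = act (SOME u. u \<in> K \<and> z = act u x) x'" for z
  have h1: "h (act u x) = act u x'" if u: "u \<in> K" for u
  proof -
    have "\<exists>v. v \<in> K \<and> act u x = act v x" using u by blast
    then have v: "(SOME v. v \<in> K \<and> act u x = act v x) \<in> K \<and> act u x = act (SOME v. v \<in> K \<and> act u x = act v x) x"
      by (rule someI_ex)
    then show ?thesis unfolding h_def using same_stab_act[OF st u] by metis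
  qed
  have eqv: "\<forall>u\<in>K. \<forall>z\<in>orb x. h (act u z) = act u (h z)"
  proof (intro ballI)
    fix u z assume u: "u \<in> K" and z: "z \<in> orb x"
    then obtain v where v: "v \<in> K" "z = act v x" by (auto simp: orb_def)
    have "h (act u z) = h (act (u \<otimes>\<^bsub>G\<^esub> v) x)" using act_mult[OF u v(1)] v by simp
    also have "\<dots> = act (u \<otimes>\<^bsub>G\<^esub> v) x'" using h1 K_mult[OF u v(1)] by simp
    also have "\<dots> = act u (h z)" using act_mult[OF u v(1)] h1[OF v(1)] v by simp
    finally show "h (act u z) = act u (h z)" .
  qed
  have inj: "inj_on h (orb x)"
  proof (rule inj_onI)
    fix z1 z2 assume "z1 \<in> orb x" "z2 \<in> orb x" "h z1 = h z2"
    then obtain u v where "u \<in> K" "v \<in> K" "z1 = act u x" "z2 = act v x" "act u x' = act v x'"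
      using h1 by (auto simp: orb_def)
    then show "z1 = z2" using same_stab_act[OF st[symmetric]] by metis
  qed
  have img: "h ` orb x = orb x'" using h1 by (auto simp: orb_def image_iff)
  show ?thesis using inj img eqv by (auto simp: bij_betw_def)
qed

lemma iso_fixp:
  assumes b: "bij_betw h A B" and eq: "\<forall>u\<in>K. \<forall>z\<in>A. h (act u z) = act u (h z)"
    and cl: "\<And>u z. u \<in> K \<Longrightarrow> z \<in> A \<Longrightarrow> act u z \<in> A" and HK: "H \<subseteq> K"
  shows "card (fixp H A) = card (fixp H B)"
proof -
  have "h ` fixp H A = fixp H B"
  proof
    show "h ` fixp H A \<subseteq> fixp H B"
    proof
      fix w assume "w \<in> h ` fixp H A"
      then obtain z where z: "z \<in> A" "\<forall>k\<in>H. act k z = z" "w = h z" by (auto simp: fixp_def)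
      have "w \<in> B" using z b by (auto simp: bij_betw_def)
      moreover have "act k w = w" if "k \<in> H" for k
        using z eq that HK by (metis subsetD)
      ultimately show "w \<in> fixp H B" by (auto simp: fixp_def)
    qed
    show "fixp H B \<subseteq> h ` fixp H A"
    proof
      fix w assume w: "w \<in> fixp H B"
      then obtain z where z: "z \<in> A" "w = h z" using b by (auto simp: fixp_def bij_betw_def)
      have "act k z = z" if k: "k \<in> H" for k
      proof -
        have "h (act k z) = h z" using eq k HK z w by (auto simp: fixp_def)
        then show ?thesis using b cl[of k z] k HK z by (auto simp: bij_betw_def inj_on_def)
      qed
      then show "w \<in> h ` fixp H A" using z by (auto simp: fixp_def)
    qed
  qed
  moreover have "inj_on h (fixp H A)" using b by (auto simp: bij_betw_def fixp_def inj_on_def)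
  ultimately show ?thesis by (metis card_image)
qed

lemma stab_subgroup: "subgroup (stab x) G"
proof
  show "stab x \<subseteq> carrier G" using K_car by (auto simp: stab_def)
  show "\<And>u v. u \<in> stab x \<Longrightarrow> v \<in> stab x \<Longrightarrow> u \<otimes>\<^bsub>G\<^esub> v \<in> stab x"
    using act_mult K_mult by (auto simp: stab_def)
  show "\<one>\<^bsub>G\<^esub> \<in> stab x" using K_one act_one by (auto simp: stab_def)
  show "\<And>u. u \<in> stab x \<Longrightarrow> inv\<^bsub>G\<^esub> u \<in> stab x"
    using K_inv inv_act1 by (auto simp: stab_def) (metis)
qed

lemma pair_exists_aux:
  assumes fin: "finite X" "finite X'"
    and cnt: "\<And>H. subgroup H G \<Longrightarrow> H \<subseteq> K \<Longrightarrow> card (fixp H X) = card (fixp H X')"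
    and z: "z \<in> X" and mx: "\<forall>w\<in>X \<union> X'. stab z \<subseteq> stab w \<longrightarrow> stab z = stab w"
  shows "\<exists>x'\<in>X'. stab z = stab x'"
proof -
  have "z \<in> fixp (stab z) X" using z by (auto simp: fixp_def stab_def)
  then have "card (fixp (stab z) X) > 0" using fin by (auto simp: fixp_def card_gt_0_iff)
  then have "card (fixp (stab z) X') > 0" using cnt[OF stab_subgroup] by (auto simp: stab_def)
  then obtain w where w: "w \<in> fixp (stab z) X'" by (metis card.empty less_irrefl ex_in_conv)
  then have "stab z \<subseteq> stab w" by (auto simp: fixp_def stab_def)
  then show ?thesis using mx w by (auto simp: fixp_def)
qed

lemma pair_exists:
  assumes fin: "finite X" "finite X'" and ne: "X \<noteq> {}"
    and cnt: "\<And>H. subgroup H G \<Longrightarrow> H \<subseteq> K \<Longrightarrow> card (fixp H X) = card (fixp H X')"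
  shows "\<exists>x\<in>X. \<exists>x'\<in>X'. stab x = stab x'"
proof -
  have T: "finite (stab ` (X \<union> X'))" "stab ` (X \<union> X') \<noteq> {}" using fin ne by auto
  obtain m where m: "m \<in> stab ` (X \<union> X')" and mx: "\<forall>b\<in>stab ` (X \<union> X'). m \<le> b \<longrightarrow> m = b"
    using finite_has_maximal[OF T] by blast
  then obtain z where z: "z \<in> X \<union> X'" "m = stab z" by blast
  have mx': "\<forall>w\<in>X \<union> X'. stab z \<subseteq> stab w \<longrightarrow> stab z = stab w" using mx z(2) by blast
  show ?thesis
  proof (cases "z \<in> X")
    case True
    from pair_exists_aux[OF fin cnt True mx'] True show ?thesis by blast
  next
    case False
    then have zX': "z \<in> X'" using z by blast
    have mx'': "\<forall>w\<in>X' \<union> X. stab z \<subseteq> stab w \<longrightarrow> stab z = stab w" using mx' by blast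
    have cnt': "card (fixp H X') = card (fixp H X)" if "subgroup H G" "H \<subseteq> K" for H
      using cnt[OF that] by simp
    from pair_exists_aux[of X' X, OF fin(2,1) cnt' zX' mx''] zX' show ?thesis by metis
  qed
qed

theorem marks:
  assumes "finite X" "finite X'"
    and "\<And>u x. u \<in> K \<Longrightarrow> x \<in> X \<Longrightarrow> act u x \<in> X"
    and "\<And>u x. u \<in> K \<Longrightarrow> x \<in> X' \<Longrightarrow> act u x \<in> X'"
    and "\<And>H. subgroup H G \<Longrightarrow> H \<subseteq> K \<Longrightarrow> card (fixp H X) = card (fixp H X')"
  shows "\<exists>f. bij_betw f X X' \<and> (\<forall>u\<in>K. \<forall>x\<in>X. f (act u x) = act u (f x))"
  using assms
proof (induction "card X" arbitrary: X X' rule: less_induct)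
  case less
  note fin = less.prems(1,2) and clX = less.prems(3) and clX' = less.prems(4) and cnt = less.prems(5)
  have triv: "subgroup {\<one>\<^bsub>G\<^esub>} G" "{\<one>\<^bsub>G\<^esub>} \<subseteq> K" using grp K_one by (auto simp: group.triv_subgroup)
  have fix1: "fixp {\<one>\<^bsub>G\<^esub>} A = A" for A by (auto simp: fixp_def act_one)
  have cardeq: "card X = card X'" using cnt[OF triv] fix1 by simp
  show ?case
  proof (cases "X = {}")
    case True
    then have "X' = {}" using cardeq fin by simp
    then show ?thesis using True by auto
  next
    case False
    then obtain x x' where xx: "x \<in> X" "x' \<in> X'" "stab x = stab x'"
      using pair_exists[OF fin False cnt] by blast
    obtain h where h: "bij_betw h (orb x) (orb x')" "\<forall>u\<in>K. \<forall>z\<in>orb x. h (act u z) = act u (h z)"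
      using orbit_iso[OF xx(3)] by blast
    have ox: "orb x \<subseteq> X" using clX xx by (auto simp: orb_def)
    have ox': "orb x' \<subseteq> X'" using clX' xx by (auto simp: orb_def)
    define X1 where "X1 = X - orb x"
    define X1' where "X1' = X' - orb x'"
    have "X1 \<subset> X" using x_in_orb[of x] xx(1) by (auto simp: X1_def)
    then have lt: "card X1 < card X" by (rule psubset_card_mono[OF fin(1)])
    have cl1: "act u z \<in> X1" if "u \<in> K" "z \<in> X1" for u z
      using that clX orb_compl_closed by (auto simp: X1_def)
    have cl1': "act u z \<in> X1'" if "u \<in> K" "z \<in> X1'" for u z
      using that clX' orb_compl_closed by (auto simp: X1'_def)
    have cnt1: "card (fixp H X1) = card (fixp H X1')" if H: "subgroup H G" "H \<subseteq> K" for H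
    proof -
      have finf: "finite (fixp H A)" if "finite A" for A using that by (auto simp: fixp_def)
      have d1: "fixp H X = fixp H X1 \<union> fixp H (orb x)" "fixp H X1 \<inter> fixp H (orb x) = {}"
        using ox by (auto simp: fixp_def X1_def)
      have d2: "fixp H X' = fixp H X1' \<union> fixp H (orb x')" "fixp H X1' \<inter> fixp H (orb x') = {}"
        using ox' by (auto simp: fixp_def X1'_def)
      have f1: "finite X1" "finite (orb x)" "finite X1'" "finite (orb x')"
        using fin ox ox' by (auto simp: X1_def X1'_def intro: finite_subset)
      have "card (fixp H X) = card (fixp H X1) + card (fixp H (orb x))"
        using d1 f1 finf by (simp add: card_Un_disjoint)
      moreover have "card (fixp H X') = card (fixp H X1') + card (fixp H (orb x'))"
        using d2 f1 finf by (simp add: card_Un_disjoint)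
      moreover have "card (fixp H (orb x)) = card (fixp H (orb x'))"
        using iso_fixp[OF h(1) h(2) orb_closed H(2)] by simp
      ultimately show ?thesis using cnt[OF H] by simp
    qed
    obtain f1 where f1: "bij_betw f1 X1 X1'" "\<forall>u\<in>K. \<forall>z\<in>X1. f1 (act u z) = act u (f1 z)"
      using less.hyps[OF lt _ _ cl1 cl1' cnt1] fin by (auto simp: X1_def X1'_def)
    define f where "f z = (if z \<in> orb x then h z else f1 z)" for z
    have "bij_betw f (orb x) (orb x')" using h(1) by (rule bij_betw_cong[THEN iffD1, rotated]) (simp add: f_def)
    moreover have "bij_betw f X1 X1'" using f1(1) by (rule bij_betw_cong[THEN iffD1, rotated]) (simp add: f_def X1_def)
    ultimately have "bij_betw f (orb x \<union> X1) (orb x' \<union> X1')"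
      by (rule bij_betw_combine) (auto simp: X1'_def)
    moreover have "orb x \<union> X1 = X" "orb x' \<union> X1' = X'" using ox ox' by (auto simp: X1_def X1'_def)
    moreover have "\<forall>u\<in>K. \<forall>z\<in>X. f (act u z) = act u (f z)"
    proof (intro ballI)
      fix u z assume u: "u \<in> K" and z: "z \<in> X"
      show "f (act u z) = act u (f z)"
      proof (cases "z \<in> orb x")
        case True
        then show ?thesis using h(2) u orb_closed by (simp add: f_def)
      next
        case False
        then have "z \<in> X1" "act u z \<notin> orb x" using z u orb_compl_closed by (auto simp: X1_def)
        then show ?thesis using f1(2) u False by (simp add: f_def)
      qed
    qed
    ultimately show ?thesis by auto
  qed
qed

end


lemma (in group) lcos_mem: "w \<in> l_coset G u V \<longleftrightarrow> (\<exists>v\<in>V. w = u \<otimes> v)"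
  by (auto simp: l_coset_def)

lemma (in group) lcos_eq:
  assumes V: "subgroup V G" and u: "u1 \<in> carrier G" "u2 \<in> carrier G" and i: "inv u1 \<otimes> u2 \<in> V"
  shows "l_coset G u1 V = l_coset G u2 V"
proof -
  have "(u1, u2) \<in> rcong V" using u i by (simp add: r_congruent_def)
  then have "rcong V `` {u1} = rcong V `` {u2}"
    using subgroup.equiv_rcong[OF V is_group] by (rule equiv_class_eq[rotated])
  then show ?thesis using subgroup.l_coset_eq_rcong[OF V is_group] u by simp
qed

lemma (in group) lcos_disj:
  assumes V: "subgroup V G" and u: "u1 \<in> carrier G" "u2 \<in> carrier G"
    and w: "w \<in> l_coset G u1 V" "w \<in> l_coset G u2 V"
  shows "l_coset G u1 V = l_coset G u2 V"
proof -
  obtain v1 v2 where v: "v1 \<in> V" "v2 \<in> V" "w = u1 \<otimes> v1" "w = u2 \<otimes> v2" using w by (auto simp: lcos_mem)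
  have vc: "v1 \<in> carrier G" "v2 \<in> carrier G" using v V by (auto simp: subgroup.mem_carrier)
  have "u1 = w \<otimes> inv v1" using v(3) vc u by (simp add: m_assoc)
  moreover have "u2 = w \<otimes> inv v2" using v(4) vc u by (simp add: m_assoc)
  ultimately have "inv u1 \<otimes> u2 = v1 \<otimes> inv v2"
    using vc u v by (simp add: inv_mult_group m_assoc[symmetric])
  also have "\<dots> \<in> V" using V v by (simp add: subgroup.m_closed subgroup.m_inv_closed)
  finally show ?thesis using lcos_eq[OF V u] by simp
qed

lemma (in group) lcos_card:
  assumes V: "subgroup V G" and u: "u \<in> carrier G"
  shows "card (l_coset G u V) = card V"
proof -
  have "l_coset G u V = (\<lambda>v. u \<otimes> v) ` V" by (auto simp: l_coset_def)
  moreover have "inj_on (\<lambda>v. u \<otimes> v) V" using V u by (auto simp: inj_on_def subgroup.mem_carrier)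
  ultimately show ?thesis by (simp add: card_image)
qed

lemma (in group) lcos_count:
  assumes H: "subgroup H G" and V: "subgroup V G" and VH: "V \<subseteq> H" and fin: "finite H"
  shows "card {l_coset G u V | u. u \<in> H} * card V = card H"
proof -
  let ?C = "{l_coset G u V | u. u \<in> H}"
  have Hc: "\<And>u. u \<in> H \<Longrightarrow> u \<in> carrier G" using H by (simp add: subgroup.mem_carrier)
  have U: "\<Union>?C = H"
  proof
    show "\<Union>?C \<subseteq> H" using H VH by (auto simp: l_coset_def subgroup.m_closed subsetD)
    show "H \<subseteq> \<Union>?C"
    proof
      fix u assume u: "u \<in> H"
      have "u \<in> l_coset G u V" using u Hc V by (auto simp: l_coset_def subgroup.one_closed intro!: bexI[of _ "\<one>"])
      then show "u \<in> \<Union>?C" using u by blast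
    qed
  qed
  have "finite ?C" using fin by simp
  then have "card V * card ?C = card (\<Union>?C)"
  proof (rule card_partition)
    show "finite (\<Union>?C)" using U fin by simp
    show "\<And>c. c \<in> ?C \<Longrightarrow> card c = card V" using lcos_card[OF V] Hc by auto
    show "\<And>c1 c2. c1 \<in> ?C \<Longrightarrow> c2 \<in> ?C \<Longrightarrow> c1 \<noteq> c2 \<Longrightarrow> c1 \<inter> c2 = {}"
      using lcos_disj[OF V] Hc by blast
  qed
  then show ?thesis using U by (simp add: mult.commute)
qed



definition coef :: "('o::comm_ring_1 \<Rightarrow> 'a::ring_1) \<Rightarrow> 'a set \<Rightarrow> 'a \<Rightarrow> 'a \<Rightarrow> 'o" where
  "coef \<iota> Y a = (THE c. (\<forall>y. y \<notin> Y \<longrightarrow> c y = 0) \<and> a = (\<Sum>y\<in>Y. \<iota> (c y) * y))"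

locale alg =
  fixes \<iota> :: "'o::comm_ring_1 \<Rightarrow> 'a::ring_1" and S :: "('g, 'b) monoid_scheme" and \<sigma> :: "'g \<Rightarrow> 'a"
  assumes Oalg: "O_algebra \<iota>" and grpS: "group S" and \<sigma>_one: "\<sigma> \<one>\<^bsub>S\<^esub> = 1"
    and \<sigma>_mult: "\<And>s t. s \<in> carrier S \<Longrightarrow> t \<in> carrier S \<Longrightarrow> \<sigma> (s \<otimes>\<^bsub>S\<^esub> t) = \<sigma> s * \<sigma> t"
begin

abbreviation GG where "GG \<equiv> S \<times>\<times> S"
abbreviation act where "act \<equiv> bact S \<sigma>"

lemma grpGG: "group GG" by (rule DirProd_group[OF grpS grpS])

lemma \<iota>_add: "\<iota> (x + y) = \<iota> x + \<iota> y" using Oalg unfolding O_algebra_def by blast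
lemma \<iota>_mult: "\<iota> (x * y) = \<iota> x * \<iota> y" using Oalg unfolding O_algebra_def by blast
lemma \<iota>_comm: "\<iota> r * a = a * \<iota> r" using Oalg unfolding O_algebra_def by blast
lemma \<iota>_one: "\<iota> 1 = 1" using Oalg unfolding O_algebra_def by blast
lemma \<iota>_zero: "\<iota> 0 = 0" using \<iota>_add[of 0 0] by simp
lemma \<iota>_sum: "\<iota> (sum f A) = (\<Sum>x\<in>A. \<iota> (f x))"
  by (induction A rule: infinite_finite_induct) (auto simp: \<iota>_zero \<iota>_add)

lemma \<sigma>_inv1: "s \<in> carrier S \<Longrightarrow> \<sigma> s * \<sigma> (inv\<^bsub>S\<^esub> s) = 1"
  using \<sigma>_mult[of s "inv\<^bsub>S\<^esub> s"] \<sigma>_one grpS by (simp add: group.r_inv group.inv_closed)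
lemma \<sigma>_inv2: "s \<in> carrier S \<Longrightarrow> \<sigma> (inv\<^bsub>S\<^esub> s) * \<sigma> s = 1"
  using \<sigma>_mult[of "inv\<^bsub>S\<^esub> s" s] \<sigma>_one grpS by (simp add: group.l_inv group.inv_closed)

lemma act_one: "act \<one>\<^bsub>GG\<^esub> a = a"
  using grpS \<sigma>_one by (simp add: bact_def monoid.inv_one group.is_monoid)

lemma act_mult: "u \<in> carrier GG \<Longrightarrow> v \<in> carrier GG \<Longrightarrow> act (u \<otimes>\<^bsub>GG\<^esub> v) a = act u (act v a)"
proof -
  assume u: "u \<in> carrier GG" and v: "v \<in> carrier GG"
  obtain u1 u2 v1 v2 where uv: "u = (u1,u2)" "v = (v1,v2)" by fastforce
  have c: "u1 \<in> carrier S" "u2 \<in> carrier S" "v1 \<in> carrier S" "v2 \<in> carrier S" using u v uv by auto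
  have "inv\<^bsub>S\<^esub> (u2 \<otimes>\<^bsub>S\<^esub> v2) = inv\<^bsub>S\<^esub> v2 \<otimes>\<^bsub>S\<^esub> inv\<^bsub>S\<^esub> u2"
    using c grpS by (simp add: group.inv_mult_group)
  then have "\<sigma> (inv\<^bsub>S\<^esub> (u2 \<otimes>\<^bsub>S\<^esub> v2)) = \<sigma> (inv\<^bsub>S\<^esub> v2) * \<sigma> (inv\<^bsub>S\<^esub> u2)"
    using c grpS \<sigma>_mult by (simp add: group.inv_closed)
  then show ?thesis using uv c \<sigma>_mult by (simp add: bact_def mult.assoc)
qed

lemma act_add: "act u (a + b) = act u a + act u b"
  by (simp add: bact_def algebra_simps)

lemma act_scal: "act u (\<iota> r * a) = \<iota> r * act u a"
  by (simp add: bact_def mult.assoc) (metis \<iota>_comm mult.assoc)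

lemma trace_scal: "trace S \<sigma> V U (\<iota> r * a) = \<iota> r * trace S \<sigma> V U a"
  by (simp add: trace_def act_scal sum_distrib_left)

lemma act_zero: "act u 0 = 0" by (simp add: bact_def)

lemma act_sum: "act u (sum f A) = (\<Sum>x\<in>A. act u (f x))"
  by (induction A rule: infinite_finite_induct) (auto simp: act_zero act_add)

lemma inv_GG: "u \<in> carrier GG \<Longrightarrow> inv\<^bsub>GG\<^esub> u \<in> carrier GG"
  using grpGG by (metis group.inv_closed)

lemma act_inv1: "u \<in> carrier GG \<Longrightarrow> act (inv\<^bsub>GG\<^esub> u) (act u a) = a"
  using act_mult[of "inv\<^bsub>GG\<^esub> u" u a] inv_GG grpGG act_one by (metis group.l_inv)
lemma act_inv2: "u \<in> carrier GG \<Longrightarrow> act u (act (inv\<^bsub>GG\<^esub> u) a) = a"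
  using act_mult[of u "inv\<^bsub>GG\<^esub> u" a] inv_GG grpGG act_one by (metis group.r_inv)

context
  fixes Y assumes B: "O_basis \<iota> Y"
begin

lemma finY: "finite Y" using B by (simp add: O_basis_def)

lemma coef_spec: "(\<forall>y. y \<notin> Y \<longrightarrow> coef \<iota> Y a y = 0) \<and> a = (\<Sum>y\<in>Y. \<iota> (coef \<iota> Y a y) * y)"
proof -
  have "\<exists>!c. (\<forall>y. y \<notin> Y \<longrightarrow> c y = 0) \<and> a = (\<Sum>y\<in>Y. \<iota> (c y) * y)" using B unfolding O_basis_def by blast
  then show ?thesis unfolding coef_def by (rule theI')
qed

lemma coef_out: "y \<notin> Y \<Longrightarrow> coef \<iota> Y a y = 0" using coef_spec by blast
lemma coef_expand: "a = (\<Sum>y\<in>Y. \<iota> (coef \<iota> Y a y) * y)" using coef_spec by blast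
lemma coef_expand': "(\<Sum>y\<in>Y. \<iota> (coef \<iota> Y a y) * y) = a" using coef_spec by metis

lemma coef_unique: "(\<forall>y. y \<notin> Y \<longrightarrow> c y = 0) \<Longrightarrow> a = (\<Sum>y\<in>Y. \<iota> (c y) * y) \<Longrightarrow> coef \<iota> Y a = c"
proof -
  assume h: "\<forall>y. y \<notin> Y \<longrightarrow> c y = 0" "a = (\<Sum>y\<in>Y. \<iota> (c y) * y)"
  have "\<exists>!c. (\<forall>y. y \<notin> Y \<longrightarrow> c y = 0) \<and> a = (\<Sum>y\<in>Y. \<iota> (c y) * y)" using B unfolding O_basis_def by blast
  then show ?thesis unfolding coef_def by (rule the1_equality) (use h in blast)
qed

lemma coef_add: "coef \<iota> Y (a + b) y = coef \<iota> Y a y + coef \<iota> Y b y"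
proof -
  have "coef \<iota> Y (a + b) = (\<lambda>y. coef \<iota> Y a y + coef \<iota> Y b y)"
  proof (rule coef_unique)
    show "\<forall>y. y \<notin> Y \<longrightarrow> coef \<iota> Y a y + coef \<iota> Y b y = 0" using coef_out by simp
    have "a + b = (\<Sum>y\<in>Y. \<iota> (coef \<iota> Y a y) * y) + (\<Sum>y\<in>Y. \<iota> (coef \<iota> Y b y) * y)"
      by (simp only: coef_expand')
    also have "\<dots> = (\<Sum>y\<in>Y. \<iota> (coef \<iota> Y a y + coef \<iota> Y b y) * y)"
      by (simp add: \<iota>_add distrib_right sum.distrib)
    finally show "a + b = (\<Sum>y\<in>Y. \<iota> (coef \<iota> Y a y + coef \<iota> Y b y) * y)" .
  qed
  then show ?thesis by simp
qed

lemma coef_scal: "coef \<iota> Y (\<iota> r * a) y = r * coef \<iota> Y a y"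
proof -
  have "coef \<iota> Y (\<iota> r * a) = (\<lambda>y. r * coef \<iota> Y a y)"
  proof (rule coef_unique)
    show "\<forall>y. y \<notin> Y \<longrightarrow> r * coef \<iota> Y a y = 0" using coef_out by simp
    have "\<iota> r * a = \<iota> r * (\<Sum>y\<in>Y. \<iota> (coef \<iota> Y a y) * y)" by (simp only: coef_expand')
    also have "\<dots> = (\<Sum>y\<in>Y. \<iota> (r * coef \<iota> Y a y) * y)"
      by (simp add: \<iota>_mult sum_distrib_left mult.assoc)
    finally show "\<iota> r * a = (\<Sum>y\<in>Y. \<iota> (r * coef \<iota> Y a y) * y)" .
  qed
  then show ?thesis by simp
qed

lemma coef_zero: "coef \<iota> Y 0 y = 0"
proof -
  have "coef \<iota> Y 0 = (\<lambda>y. 0)" by (rule coef_unique) (auto simp: \<iota>_zero)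
  then show ?thesis by simp
qed

lemma coef_sum: "coef \<iota> Y (sum f A) y = (\<Sum>i\<in>A. coef \<iota> Y (f i) y)"
  by (induction A rule: infinite_finite_induct) (auto simp: coef_zero coef_add)

lemma coef_basis: "z \<in> Y \<Longrightarrow> coef \<iota> Y z y = (if y = z then 1 else 0)"
proof -
  assume z: "z \<in> Y"
  have "coef \<iota> Y z = (\<lambda>y. if y = z then 1 else 0)"
  proof (rule coef_unique)
    show "\<forall>y. y \<notin> Y \<longrightarrow> (if y = z then 1 else 0) = 0" using z by auto
    have "(\<Sum>y\<in>Y. \<iota> (if y = z then 1 else 0) * y) = (\<Sum>y\<in>Y. if y = z then y else 0)"
      using \<iota>_one \<iota>_zero by (intro sum.cong) auto
    also have "\<dots> = z" using z finY by simp
    finally show "z = (\<Sum>y\<in>Y. \<iota> (if y = z then 1 else 0) * y)" by simp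
  qed
  then show ?thesis by simp
qed

lemma coef_act:
  assumes u: "u \<in> carrier GG" and cl: "\<And>y. y \<in> Y \<Longrightarrow> act u y \<in> Y"
    and cl': "\<And>y. y \<in> Y \<Longrightarrow> act (inv\<^bsub>GG\<^esub> u) y \<in> Y" and z: "z \<in> Y"
  shows "coef \<iota> Y (act u a) z = coef \<iota> Y a (act (inv\<^bsub>GG\<^esub> u) z)"
proof -
  define c where "c w = (if w \<in> Y then coef \<iota> Y a (act (inv\<^bsub>GG\<^esub> u) w) else 0)" for w
  have bij: "bij_betw (act u) Y Y"
  proof (rule bij_betw_imageI)
    show "inj_on (act u) Y" using act_inv1[OF u] by (metis inj_onI)
    show "act u ` Y = Y"
    proof
      show "act u ` Y \<subseteq> Y" using cl by auto
      show "Y \<subseteq> act u ` Y"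
      proof
        fix w assume "w \<in> Y"
        then show "w \<in> act u ` Y" using cl' act_inv2[OF u, of w] by (metis image_eqI)
      qed
    qed
  qed
  have "coef \<iota> Y (act u a) = c"
  proof (rule coef_unique)
    show "\<forall>y. y \<notin> Y \<longrightarrow> c y = 0" by (simp add: c_def)
    have "(\<Sum>w\<in>Y. \<iota> (c w) * w) = (\<Sum>y\<in>Y. \<iota> (c (act u y)) * act u y)"
      using sum.reindex_bij_betw[OF bij, of "\<lambda>w. \<iota> (c w) * w"] by simp
    also have "\<dots> = (\<Sum>y\<in>Y. act u (\<iota> (coef \<iota> Y a y) * y))"
      using cl act_inv1[OF u] by (intro sum.cong) (auto simp: c_def act_scal)
    also have "\<dots> = act u (\<Sum>y\<in>Y. \<iota> (coef \<iota> Y a y) * y)" by (simp add: act_sum)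
    also have "\<dots> = act u a" by (simp only: coef_expand')
    finally show "act u a = (\<Sum>w\<in>Y. \<iota> (c w) * w)" by simp
  qed
  then show ?thesis using z by (simp add: c_def)
qed

end
end



locale halg = alg \<iota> S \<sigma> for \<iota> :: "'o::comm_ring_1 \<Rightarrow> 'a::ring_1" and S :: "('g, 'b) monoid_scheme" and \<sigma> +
  fixes H :: "('g \<times> 'g) set" and Y :: "'a set"
  assumes B: "O_basis \<iota> Y" and subH: "subgroup H (S \<times>\<times> S)"
    and Yinv: "\<And>u y. u \<in> H \<Longrightarrow> y \<in> Y \<Longrightarrow> bact S \<sigma> u y \<in> Y"

sublocale halg \<subseteq> G: gact "S \<times>\<times> S" H "bact S \<sigma>"
proof (rule gact.intro)
  show "group (S \<times>\<times> S)" by (rule grpGG)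
  show "subgroup H (S \<times>\<times> S)" by (rule subH)
  show "\<And>x. bact S \<sigma> \<one>\<^bsub>S \<times>\<times> S\<^esub> x = x" by (rule act_one)
  show "\<And>u v x. u \<in> H \<Longrightarrow> v \<in> H \<Longrightarrow> bact S \<sigma> (u \<otimes>\<^bsub>S \<times>\<times> S\<^esub> v) x = bact S \<sigma> u (bact S \<sigma> v x)"
    using act_mult subH by (meson subgroup.mem_carrier)
qed

context halg
begin

lemma Hc: "u \<in> H \<Longrightarrow> u \<in> carrier GG" using subH by (meson subgroup.mem_carrier)

lemma fixed_coef:
  assumes a: "a \<in> fixed S \<sigma> H" and u: "u \<in> H" and y: "y \<in> Y"
  shows "coef \<iota> Y a (act u y) = coef \<iota> Y a y"
proof -
  have iu: "inv\<^bsub>GG\<^esub> u \<in> H" using G.K_inv[OF u] .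
  have ii: "inv\<^bsub>GG\<^esub> (inv\<^bsub>GG\<^esub> u) = u" using grpGG Hc[OF u] by (simp add: group.inv_inv)
  have "coef \<iota> Y (act (inv\<^bsub>GG\<^esub> u) a) y = coef \<iota> Y a (act (inv\<^bsub>GG\<^esub> (inv\<^bsub>GG\<^esub> u)) y)"
    by (rule coef_act[OF B Hc[OF iu]]) (use Yinv iu ii u y in auto)
  moreover have "act (inv\<^bsub>GG\<^esub> u) a = a" using a iu by (simp add: fixed_def)
  ultimately show ?thesis using ii by simp
qed

lemma self_coset: "u \<in> H \<Longrightarrow> subgroup V GG \<Longrightarrow> u \<in> l_coset GG u V"
proof -
  assume u: "u \<in> H" and V: "subgroup V GG"
  have "\<one>\<^bsub>GG\<^esub> \<in> V" using V by (rule subgroup.one_closed)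
  moreover have "u = u \<otimes>\<^bsub>GG\<^esub> \<one>\<^bsub>GG\<^esub>" using grpGG Hc[OF u] by (metis group.is_monoid monoid.r_one)
  ultimately show ?thesis using group.lcos_mem[OF grpGG] by blast
qed

lemma orb_sub: "y \<in> Y \<Longrightarrow> G.orb y \<subseteq> Y" using Yinv by (auto simp: G.orb_def)

lemma lcos_rep:
  assumes u: "u \<in> H"
  shows "(SOME w. w \<in> l_coset GG u (G.stab y)) \<in> l_coset GG u (G.stab y)"
    and "act (SOME w. w \<in> l_coset GG u (G.stab y)) y = act u y"
    and "(SOME w. w \<in> l_coset GG u (G.stab y)) \<in> H"
proof -
  have "u \<in> l_coset GG u (G.stab y)" by (rule self_coset[OF u G.stab_subgroup])
  then show 1: "(SOME w. w \<in> l_coset GG u (G.stab y)) \<in> l_coset GG u (G.stab y)" by (rule someI)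
  then obtain v where v: "v \<in> G.stab y" "(SOME w. w \<in> l_coset GG u (G.stab y)) = u \<otimes>\<^bsub>GG\<^esub> v"
    by (auto simp: l_coset_def)
  then show "act (SOME w. w \<in> l_coset GG u (G.stab y)) y = act u y"
    using G.act_mult[OF u] by (auto simp: G.stab_def)
  show "(SOME w. w \<in> l_coset GG u (G.stab y)) \<in> H" using v u G.K_mult by (auto simp: G.stab_def)
qed

lemma orbit_trace:
  assumes y: "y \<in> Y"
  shows "trace S \<sigma> (G.stab y) H y = (\<Sum>z\<in>G.orb y. z)"
proof -
  let ?V = "G.stab y"
  let ?C = "{l_coset GG u ?V | u. u \<in> H}"
  define g where "g C = act (SOME w. w \<in> C) y" for C
  have gu: "g (l_coset GG u ?V) = act u y" if "u \<in> H" for u using lcos_rep[OF that] by (simp add: g_def)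
  have bij: "bij_betw g ?C (G.orb y)"
  proof (rule bij_betw_imageI)
    show "inj_on g ?C"
    proof (rule inj_onI)
      fix C1 C2 assume "C1 \<in> ?C" "C2 \<in> ?C" "g C1 = g C2"
      then obtain u1 u2 where u: "u1 \<in> H" "u2 \<in> H" "C1 = l_coset GG u1 ?V" "C2 = l_coset GG u2 ?V"
        and e: "act u1 y = act u2 y" using gu by auto
      have "act (inv\<^bsub>GG\<^esub> u1 \<otimes>\<^bsub>GG\<^esub> u2) y = y"
        using G.act_mult[OF G.K_inv[OF u(1)] u(2)] e G.inv_act1[OF u(1)] by metis
      then have "inv\<^bsub>GG\<^esub> u1 \<otimes>\<^bsub>GG\<^esub> u2 \<in> ?V" using G.K_mult G.K_inv u by (auto simp: G.stab_def)
      then show "C1 = C2" using group.lcos_eq[OF grpGG G.stab_subgroup Hc Hc] u by simp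
    qed
    show "g ` ?C = G.orb y"
    proof
      show "g ` ?C \<subseteq> G.orb y" using gu by (auto simp: G.orb_def)
      show "G.orb y \<subseteq> g ` ?C"
      proof
        fix z assume "z \<in> G.orb y"
        then obtain u where u: "u \<in> H" "z = act u y" by (auto simp: G.orb_def)
        then have "z = g (l_coset GG u ?V)" using gu by simp
        moreover have "l_coset GG u ?V \<in> ?C" using u by blast
        ultimately show "z \<in> g ` ?C" by blast
      qed
    qed
  qed
  have "trace S \<sigma> ?V H y = (\<Sum>C\<in>?C. g C)" by (simp add: trace_def g_def)
  also have "\<dots> = (\<Sum>z\<in>G.orb y. z)" using sum.reindex_bij_betw[OF bij, of "\<lambda>z. z"] by simp
  finally show ?thesis .
qed

lemma trace_coef:
  assumes V: "V \<subseteq> H" and Vs: "subgroup V GG" and b: "b \<in> fixed S \<sigma> V" and yh: "yh \<in> G.fixp H Y"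
  shows "coef \<iota> Y (trace S \<sigma> V H b) yh = of_nat (card {l_coset GG u V | u. u \<in> H}) * coef \<iota> Y b yh"
proof -
  let ?C = "{l_coset GG u V | u. u \<in> H}"
  have "coef \<iota> Y (trace S \<sigma> V H b) yh = (\<Sum>C\<in>?C. coef \<iota> Y (act (SOME w. w \<in> C) b) yh)"
    by (simp add: trace_def coef_sum[OF B])
  also have "\<dots> = (\<Sum>C\<in>?C. coef \<iota> Y b yh)"
  proof (rule sum.cong[OF refl])
    fix C assume "C \<in> ?C"
    then obtain u where u: "u \<in> H" "C = l_coset GG u V" by auto
    have "u \<in> C" using self_coset[OF u(1) Vs] u(2) by simp
    then have r: "(SOME w. w \<in> C) \<in> C" by (rule someI)
    then obtain v where v: "v \<in> V" "(SOME w. w \<in> C) = u \<otimes>\<^bsub>GG\<^esub> v" using u by (auto simp: l_coset_def)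
    define r where "r = (SOME w. w \<in> C)"
    have "v \<in> H" using v V by blast
    then have "u \<otimes>\<^bsub>GG\<^esub> v \<in> H" by (rule G.K_mult[OF u(1)])
    then have rH: "r \<in> H" using v(2) r_def by simp
    have iH: "inv\<^bsub>GG\<^esub> r \<in> H" using G.K_inv[OF rH] .
    have yY: "yh \<in> Y" using yh by (simp add: G.fixp_def)
    have "coef \<iota> Y (act r b) yh = coef \<iota> Y b (act (inv\<^bsub>GG\<^esub> r) yh)"
      by (rule coef_act[OF B Hc[OF rH]]) (use Yinv rH iH yY in auto)
    also have "act (inv\<^bsub>GG\<^esub> r) yh = yh" using yh iH by (simp add: G.fixp_def)
    finally show "coef \<iota> Y (act (SOME w. w \<in> C) b) yh = coef \<iota> Y b yh" by (simp add: r_def)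
  qed
  also have "\<dots> = of_nat (card ?C) * coef \<iota> Y b yh" by simp
  finally show ?thesis .
qed

lemma decomp:
  assumes a: "a \<in> fixed S \<sigma> H"
  shows "\<exists>(n::nat) V b. (\<forall>i<n. subgroup (V i) GG \<and> V i \<subset> H \<and> b i \<in> fixed S \<sigma> (V i)) \<and>
     a = (\<Sum>y\<in>G.fixp H Y. \<iota> (coef \<iota> Y a y) * y) + (\<Sum>i<n. trace S \<sigma> (V i) H (b i))"
proof -
  let ?F = "G.fixp H Y"
  define N where "N = Y - ?F"
  define Orbs where "Orbs = G.orb ` N"
  have finY: "finite Y" using finY[OF B] .
  have FY: "?F \<subseteq> Y" by (auto simp: G.fixp_def)
  have split: "a = (\<Sum>y\<in>?F. \<iota> (coef \<iota> Y a y) * y) + (\<Sum>y\<in>N. \<iota> (coef \<iota> Y a y) * y)"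
  proof -
    have "a = (\<Sum>y\<in>Y. \<iota> (coef \<iota> Y a y) * y)" by (rule coef_expand[OF B])
    also have "\<dots> = (\<Sum>y\<in>Y - ?F. \<iota> (coef \<iota> Y a y) * y) + (\<Sum>y\<in>?F. \<iota> (coef \<iota> Y a y) * y)"
      by (rule sum.subset_diff[OF FY finY])
    finally show ?thesis by (simp add: N_def add.commute)
  qed
  have orbN: "G.orb y \<subseteq> N" if y: "y \<in> N" for y
  proof
    fix z assume z: "z \<in> G.orb y"
    then obtain u where u: "u \<in> H" "z = act u y" by (auto simp: G.orb_def)
    have zY: "z \<in> Y" using orb_sub z y by (auto simp: N_def)
    have "z \<notin> ?F"
    proof
      assume zF: "z \<in> ?F"
      have "y = act (inv\<^bsub>GG\<^esub> u) z" using G.inv_act1[OF u(1)] u(2) by simp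
      then have "y = z" using zF G.K_inv[OF u(1)] by (simp add: G.fixp_def)
      then show False using zF y by (simp add: N_def)
    qed
    then show "z \<in> N" using zY by (simp add: N_def)
  qed
  have UO: "\<Union>Orbs = N" using orbN G.x_in_orb by (auto simp: Orbs_def)
  have finN: "finite N" using finY by (simp add: N_def)
  have finO: "finite Orbs" using finN by (simp add: Orbs_def)
  have "(\<Sum>y\<in>N. \<iota> (coef \<iota> Y a y) * y) = (\<Sum>Ob\<in>Orbs. \<Sum>y\<in>Ob. \<iota> (coef \<iota> Y a y) * y)"
  proof -
    have "(\<Sum>y\<in>\<Union>Orbs. \<iota> (coef \<iota> Y a y) * y) = (\<Sum>Ob\<in>Orbs. \<Sum>y\<in>Ob. \<iota> (coef \<iota> Y a y) * y)"
    proof -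
      have f: "\<forall>A\<in>Orbs. finite A" using UO finN by (metis Union_upper finite_subset)
      have d: "\<forall>A\<in>Orbs. \<forall>B\<in>Orbs. A \<noteq> B \<longrightarrow> A \<inter> B = {}"
        unfolding Orbs_def using G.orb_eq by blast
      show ?thesis using sum.Union_disjoint[OF f d] by simp
    qed
    then show ?thesis using UO by simp
  qed
  define rep where "rep Ob = (SOME y. y \<in> N \<and> Ob = G.orb y)" for Ob
  have rep: "rep Ob \<in> N \<and> Ob = G.orb (rep Ob)" if "Ob \<in> Orbs" for Ob
  proof -
    have "\<exists>y. y \<in> N \<and> Ob = G.orb y" using that by (auto simp: Orbs_def)
    then show ?thesis unfolding rep_def by (rule someI_ex)
  qed
  define T where "T Ob = trace S \<sigma> (G.stab (rep Ob)) H (\<iota> (coef \<iota> Y a (rep Ob)) * rep Ob)" for Ob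
  have inner: "(\<Sum>y\<in>Ob. \<iota> (coef \<iota> Y a y) * y) = T Ob" if O: "Ob \<in> Orbs" for Ob
  proof -
    have rO: "rep Ob \<in> N" "Ob = G.orb (rep Ob)" using rep[OF O] by auto
    have rY: "rep Ob \<in> Y" using rO by (simp add: N_def)
    have "(\<Sum>y\<in>Ob. \<iota> (coef \<iota> Y a y) * y) = (\<Sum>y\<in>Ob. \<iota> (coef \<iota> Y a (rep Ob)) * y)"
    proof (rule sum.cong[OF refl])
      fix y assume "y \<in> Ob"
      then have "y \<in> G.orb (rep Ob)" using rO by simp
      then obtain u where "u \<in> H" "y = act u (rep Ob)" unfolding G.orb_def by blast
      then show "\<iota> (coef \<iota> Y a y) * y = \<iota> (coef \<iota> Y a (rep Ob)) * y" using fixed_coef[OF a _ rY] by simp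
    qed
    also have "\<dots> = \<iota> (coef \<iota> Y a (rep Ob)) * (\<Sum>y\<in>Ob. y)" by (simp add: sum_distrib_left)
    also have "\<dots> = \<iota> (coef \<iota> Y a (rep Ob)) * trace S \<sigma> (G.stab (rep Ob)) H (rep Ob)"
      using orbit_trace[OF rY] rO by simp
    also have "\<dots> = T Ob" unfolding T_def using trace_scal by simp
    finally show ?thesis .
  qed
  obtain e where e: "bij_betw e {0..<card Orbs} Orbs" using ex_bij_betw_nat_finite[OF finO] by blast
  define n where "n = card Orbs"
  define V where "V i = G.stab (rep (e i))" for i
  define b where "b i = \<iota> (coef \<iota> Y a (rep (e i))) * rep (e i)" for i
  have "(\<Sum>Ob\<in>Orbs. \<Sum>y\<in>Ob. \<iota> (coef \<iota> Y a y) * y) = (\<Sum>Ob\<in>Orbs. T Ob)" using inner by simp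
  also have "\<dots> = (\<Sum>i\<in>{0..<n}. T (e i))" using sum.reindex_bij_betw[OF e, of T] by (simp add: n_def)
  also have "\<dots> = (\<Sum>i<n. trace S \<sigma> (V i) H (b i))" by (simp add: T_def V_def b_def atLeast0LessThan)
  finally have eqN: "(\<Sum>y\<in>N. \<iota> (coef \<iota> Y a y) * y) = (\<Sum>i<n. trace S \<sigma> (V i) H (b i))"
    using \<open>(\<Sum>y\<in>N. \<iota> (coef \<iota> Y a y) * y) = _\<close> by simp
  have conds: "subgroup (V i) GG \<and> V i \<subset> H \<and> b i \<in> fixed S \<sigma> (V i)" if i: "i < n" for i
  proof -
    have eO: "e i \<in> Orbs" using e i by (auto simp: bij_betw_def n_def)
    have rN: "rep (e i) \<in> N" using rep[OF eO] by simp
    have sub: "V i \<subseteq> H" by (auto simp: V_def G.stab_def)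
    have "V i \<noteq> H"
    proof
      assume "V i = H"
      then have "rep (e i) \<in> ?F" using rN by (auto simp: V_def G.stab_def G.fixp_def N_def)
      then show False using rN by (simp add: N_def)
    qed
    moreover have "b i \<in> fixed S \<sigma> (V i)"
      by (auto simp: fixed_def b_def V_def act_scal G.stab_def)
    ultimately show ?thesis using sub G.stab_subgroup by (auto simp: V_def)
  qed
  have ae: "a = (\<Sum>y\<in>?F. \<iota> (coef \<iota> Y a y) * y) + (\<Sum>i<n. trace S \<sigma> (V i) H (b i))"
    using split eqN by simp
  have ce: "\<forall>i<n. subgroup (V i) GG \<and> V i \<subset> H \<and> b i \<in> fixed S \<sigma> (V i)" using conds by blast
  show ?thesis using ae ce by (intro exI[of _ n] exI[of _ V] exI[of _ b] conjI)
qed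

end


lemma pdiv_index:
  assumes p: "prime (p::nat)" and e: "c * p ^ b = p ^ a" and lt: "p ^ b < p ^ a"
  shows "p dvd c"
proof -
  have p1: "1 < p" using prime_gt_1_nat[OF p] .
  have ba: "b < a" using lt p1 by (simp add: power_strict_increasing_iff)
  have "p ^ a = p ^ b * p ^ (a - b)" using ba by (simp add: power_add[symmetric])
  then have "c * p ^ b = p ^ (a - b) * p ^ b" using e by (simp add: mult.commute)
  then have "c = p ^ (a - b)" using p1 by simp
  then show ?thesis using ba by simp
qed

context alg
begin

lemma subgroup_ppow:
  assumes p: "prime p" and fin: "finite (carrier S)" and k: "card (carrier S) = p ^ k"
    and H: "subgroup H GG"
  shows "\<exists>a. card H = p ^ a"
proof -
  have "card (rcosets\<^bsub>GG\<^esub> H) * card H = Coset.order GG" by (rule group.lagrange[OF grpGG H])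
  moreover have "Coset.order GG = card (carrier S) * card (carrier S)"
    by (simp add: Coset.order_def card_cartesian_product)
  moreover have "card (carrier S) * card (carrier S) = p ^ (2 * k)" using k by (simp add: mult_2 power_add)
  ultimately have "card H dvd p ^ (2 * k)" by (metis dvd_triv_right)
  then show ?thesis using divides_primepow_nat[OF p] by blast
qed

lemma finite_sub: "finite (carrier S) \<Longrightarrow> subgroup H GG \<Longrightarrow> finite H"
  by (metis finite_SigmaI carrier_DirProd finite_subset subgroup.subset)

end

context halg
begin

lemma trace_coef_M:
  assumes p: "prime p" and fin: "finite (carrier S)" and k: "card (carrier S) = p ^ k"
    and I: "is_ideal M" and pM: "(of_nat p :: 'o) \<in> M"
    and VH: "V \<subset> H" and Vs: "subgroup V GG" and b: "b \<in> fixed S \<sigma> V" and yh: "yh \<in> G.fixp H Y"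
  shows "coef \<iota> Y (trace S \<sigma> V H b) yh \<in> M"
proof -
  let ?C = "{l_coset GG u V | u. u \<in> H}"
  have eq: "coef \<iota> Y (trace S \<sigma> V H b) yh = of_nat (card ?C) * coef \<iota> Y b yh"
    using trace_coef[OF _ Vs b yh] VH by blast
  have finH: "finite H" by (rule finite_sub[OF fin subH])
  have cnt: "card ?C * card V = card H" using group.lcos_count[OF grpGG subH Vs] VH finH by blast
  obtain a where a: "card H = p ^ a" using subgroup_ppow[OF p fin k subH] by blast
  obtain bb where bb: "card V = p ^ bb" using subgroup_ppow[OF p fin k Vs] by blast
  have "card V < card H" using VH finH by (simp add: psubset_card_mono)
  then have lt: "p ^ bb < p ^ a" using a bb by simp
  have "card ?C * p ^ bb = p ^ a" using cnt a bb by simp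
  then have "p dvd card ?C" using pdiv_index[OF p _ lt] by blast
  then obtain t where t: "card ?C = p * t" by blast
  have "(of_nat (card ?C) :: 'o) = of_nat p * of_nat t" using t by simp
  then have "(of_nat (card ?C) :: 'o) \<in> M" using pM I by (simp add: ideal_mult2)
  then show ?thesis using eq I by (simp add: ideal_mult2)
qed

end

lemma aux_eq: "x = a + t \<Longrightarrow> a = q \<Longrightarrow> x = d \<Longrightarrow> q - d = - (t::'o::comm_ring_1)"
  by (simp add: algebra_simps)

context alg
begin

lemma count_le:
  assumes p: "prime p" and fin: "finite (carrier S)" and k: "card (carrier S) = p ^ k"
    and I: "is_ideal M" and one: "(1::'o) \<notin> M" and pM: "(of_nat p :: 'o) \<in> M"
    and h1: "halg \<iota> S \<sigma> H Y1" and h2: "halg \<iota> S \<sigma> H Y2"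
  shows "card (gact.fixp act H Y1) \<le> card (gact.fixp act H Y2)"
proof -
  interpret h1: halg \<iota> S \<sigma> H Y1 by (rule h1)
  interpret h2: halg \<iota> S \<sigma> H Y2 by (rule h2)
  let ?F1 = "gact.fixp act H Y1" and ?F2 = "gact.fixp act H Y2"
  have fin1: "finite ?F1" using finY[OF h1.B] by (auto simp: h1.G.fixp_def)
  have fin2: "finite ?F2" using finY[OF h2.B] by (auto simp: h1.G.fixp_def)
  obtain e1 where e1: "bij_betw e1 {0..<card ?F1} ?F1" using ex_bij_betw_nat_finite[OF fin1] by blast
  obtain e2 where e2: "bij_betw e2 {0..<card ?F2} ?F2" using ex_bij_betw_nat_finite[OF fin2] by blast
  define n where "n = card ?F1"
  define m where "m = card ?F2"
  define P where "P i j = coef \<iota> Y2 (e1 i) (e2 j)" for i j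
  define Q where "Q j k = coef \<iota> Y1 (e2 j) (e1 k)" for j k
  have key: "(\<Sum>j<m. P i j * Q j kk) - (if i = kk then 1 else 0) \<in> M" if i: "i < n" and kk: "kk < n" for i kk
  proof -
    define y where "y = e1 i"
    define yh where "yh = e1 kk"
    have yF: "y \<in> ?F1" unfolding y_def by (rule bij_betw_apply[OF e1]) (use i in \<open>simp add: n_def\<close>)
    have yhF: "yh \<in> ?F1" unfolding yh_def by (rule bij_betw_apply[OF e1]) (use kk in \<open>simp add: n_def\<close>)
    have yY: "y \<in> Y1" using yF by (simp add: h1.G.fixp_def)
    have yhY: "yh \<in> Y1" using yhF by (simp add: h1.G.fixp_def)
    have yfix: "y \<in> fixed S \<sigma> H" using yF by (simp add: h1.G.fixp_def fixed_def)
    obtain nn :: nat and V b where cond: "\<forall>l<nn. subgroup (V l) GG \<and> V l \<subset> H \<and> b l \<in> fixed S \<sigma> (V l)"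
      and dec: "y = (\<Sum>z\<in>?F2. \<iota> (coef \<iota> Y2 y z) * z) + (\<Sum>l<nn. trace S \<sigma> (V l) H (b l))"
      using h2.decomp[OF yfix] by blast
    have delta: "coef \<iota> Y1 y yh = (if i = kk then 1 else 0)"
    proof -
      have "(yh = y) = (kk = i)" unfolding y_def yh_def
        by (rule inj_on_eq_iff[OF bij_betw_imp_inj_on[OF e1]]) (use i kk in \<open>simp_all add: n_def\<close>)
      then show ?thesis using coef_basis[OF h1.B yY] by simp
    qed
    have c1: "coef \<iota> Y1 y yh = (\<Sum>z\<in>?F2. coef \<iota> Y2 y z * coef \<iota> Y1 z yh) + (\<Sum>l<nn. coef \<iota> Y1 (trace S \<sigma> (V l) H (b l)) yh)"
    proof -
      have "coef \<iota> Y1 y yh = coef \<iota> Y1 ((\<Sum>z\<in>?F2. \<iota> (coef \<iota> Y2 y z) * z) + (\<Sum>l<nn. trace S \<sigma> (V l) H (b l))) yh"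
        using dec by (rule arg_cong)
      also have "\<dots> = (\<Sum>z\<in>?F2. coef \<iota> Y2 y z * coef \<iota> Y1 z yh) + (\<Sum>l<nn. coef \<iota> Y1 (trace S \<sigma> (V l) H (b l)) yh)"
        by (simp add: coef_add[OF h1.B] coef_sum[OF h1.B] coef_scal[OF h1.B])
      finally show ?thesis .
    qed
    have c2: "(\<Sum>z\<in>?F2. coef \<iota> Y2 y z * coef \<iota> Y1 z yh) = (\<Sum>j<m. P i j * Q j kk)"
    proof -
      have "(\<Sum>z\<in>?F2. coef \<iota> Y2 y z * coef \<iota> Y1 z yh) = (\<Sum>j\<in>{0..<m}. coef \<iota> Y2 y (e2 j) * coef \<iota> Y1 (e2 j) yh)"
        using sum.reindex_bij_betw[OF e2, of "\<lambda>z. coef \<iota> Y2 y z * coef \<iota> Y1 z yh"] by (simp add: m_def)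
      then show ?thesis by (simp add: P_def Q_def y_def yh_def atLeast0LessThan)
    qed
    have c3: "(\<Sum>l<nn. coef \<iota> Y1 (trace S \<sigma> (V l) H (b l)) yh) \<in> M"
    proof (rule ideal_sum[OF I])
      fix l assume "l \<in> {..<nn}"
      then have c: "subgroup (V l) GG" "V l \<subset> H" "b l \<in> fixed S \<sigma> (V l)" using cond by auto
      show "coef \<iota> Y1 (trace S \<sigma> (V l) H (b l)) yh \<in> M"
        by (rule h1.trace_coef_M[OF p fin k I pM c(2) c(1) c(3) yhF])
    qed
    have "(\<Sum>j<m. P i j * Q j kk) - (if i = kk then 1 else 0) = - (\<Sum>l<nn. coef \<iota> Y1 (trace S \<sigma> (V l) H (b l)) yh)"
      by (rule aux_eq[OF c1 c2 delta])
    then show ?thesis using ideal_neg[OF I c3] by simp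
  qed
  have "n \<le> m" by (rule rank_lemma[OF I one key])
  then show ?thesis by (simp add: n_def m_def)
qed

end


context alg
begin

lemma basis_mult:
  assumes B: "O_basis \<iota> Y" and w1: "y0 * w = 1" and w2: "w * y0 = 1"
  shows "O_basis \<iota> ((\<lambda>y. w * y) ` Y)"
proof -
  let ?Y' = "(\<lambda>y. w * y) ` Y"
  have inj: "inj_on (\<lambda>y. w * y) Y"
  proof (rule inj_onI)
    fix a b assume "w * a = w * b"
    then have "y0 * (w * a) = y0 * (w * b)" by simp
    then show "a = b" using w1 by (simp add: mult.assoc[symmetric])
  qed
  have bk: "y0 * (w * y) = y" for y using w1 by (simp add: mult.assoc[symmetric])
  have central: "\<iota> r * (w * y) = w * (\<iota> r * y)" for r y
    by (metis \<iota>_comm mult.assoc)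
  have "\<exists>!c. (\<forall>z. z \<notin> ?Y' \<longrightarrow> c z = 0) \<and> a = (\<Sum>z\<in>?Y'. \<iota> (c z) * z)" for a
  proof -
    define c0 where "c0 z = (if z \<in> ?Y' then coef \<iota> Y (y0 * a) (y0 * z) else 0)" for z
    have s1: "(\<Sum>z\<in>?Y'. \<iota> (c z) * z) = (\<Sum>y\<in>Y. \<iota> (c (w * y)) * (w * y))" for c
      using sum.reindex[OF inj, of "\<lambda>z. \<iota> (c z) * z"] by simp
    show ?thesis
    proof (rule ex1I[of _ c0])
      show "(\<forall>z. z \<notin> ?Y' \<longrightarrow> c0 z = 0) \<and> a = (\<Sum>z\<in>?Y'. \<iota> (c0 z) * z)"
      proof
        show "\<forall>z. z \<notin> ?Y' \<longrightarrow> c0 z = 0" by (simp add: c0_def)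
        have "(\<Sum>z\<in>?Y'. \<iota> (c0 z) * z) = (\<Sum>y\<in>Y. \<iota> (coef \<iota> Y (y0 * a) y) * (w * y))"
          unfolding s1 by (intro sum.cong refl) (simp add: c0_def bk)
        also have "\<dots> = w * (\<Sum>y\<in>Y. \<iota> (coef \<iota> Y (y0 * a) y) * y)"
          by (simp add: central sum_distrib_left)
        also have "\<dots> = w * (y0 * a)" by (simp only: coef_expand'[OF B])
        also have "\<dots> = a" using w2 by (simp add: mult.assoc[symmetric])
        finally show "a = (\<Sum>z\<in>?Y'. \<iota> (c0 z) * z)" by simp
      qed
    next
      fix c assume c: "(\<forall>z. z \<notin> ?Y' \<longrightarrow> c z = 0) \<and> a = (\<Sum>z\<in>?Y'. \<iota> (c z) * z)"
      define d where "d y = (if y \<in> Y then c (w * y) else 0)" for y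
      have "coef \<iota> Y (y0 * a) = d"
      proof (rule coef_unique[OF B])
        show "\<forall>y. y \<notin> Y \<longrightarrow> d y = 0" by (simp add: d_def)
        have "y0 * a = y0 * (\<Sum>y\<in>Y. \<iota> (c (w * y)) * (w * y))" using c s1 by metis
        also have "\<dots> = (\<Sum>y\<in>Y. \<iota> (c (w * y)) * y)"
          by (simp only: sum_distrib_left central bk)
        also have "\<dots> = (\<Sum>y\<in>Y. \<iota> (d y) * y)" by (intro sum.cong refl) (simp add: d_def)
        finally show "y0 * a = (\<Sum>y\<in>Y. \<iota> (d y) * y)" .
      qed
      then show "c = c0"
      proof -
        assume cd: "coef \<iota> Y (y0 * a) = d"
        show "c = c0"
        proof
          fix z show "c z = c0 z"
          proof (cases "z \<in> ?Y'")
            case True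
            then obtain y where y: "y \<in> Y" "z = w * y" by blast
            then show ?thesis using cd by (simp add: c0_def d_def bk)
          next
            case False
            then show ?thesis using c by (simp add: c0_def)
          qed
        qed
      qed
    qed
  qed
  moreover have "finite ?Y'" using finY[OF B] by simp
  ultimately show ?thesis by (simp add: O_basis_def)
qed

end

theorem proposition4p2:
  fixes M :: "'o::idom set" and p :: nat and \<iota> :: "'o \<Rightarrow> 'a::ring_1"
    and S :: "('g, 'b) monoid_scheme" and \<sigma> :: "'g \<Rightarrow> 'a" and Y :: "'a set"
  assumes "prime p" and "standing_O M p"
    and "group S" and "finite (carrier S)" and "\<exists>k. card (carrier S) = p ^ k"
    and "divisible_alg M \<iota> S \<sigma>"
    and "O_basis \<iota> Y" and "SS_invariant S \<sigma> Y" and "\<forall>y\<in>Y. unit_of y"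
  shows "\<forall>P \<phi>. subgroup P S \<and> \<phi> \<in> FHom M \<iota> S \<sigma> P (carrier S) \<longrightarrow> twisted_biset_iso S \<sigma> Y P \<phi>"
proof (intro allI impI, elim conjE)
  note p = assms(1) and std = assms(2) and grpS = assms(3) and fin = assms(4)
    and div = assms(6) and B = assms(7) and SSi = assms(8) and units = assms(9)
  obtain k where k: "card (carrier S) = p ^ k" using assms(5) by blast
  fix P \<phi> assume P: "subgroup P S" and \<phi>F: "\<phi> \<in> FHom M \<iota> S \<sigma> P (carrier S)"
  have ia: "interior_alg S \<iota> \<sigma>" using div by (simp add: divisible_alg_def)
  have algI: "alg \<iota> S \<sigma>"
  proof (rule alg.intro)
    show "O_algebra \<iota>" using ia by (simp add: interior_alg_def)
    show "group S" by (rule grpS)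
    show "\<sigma> \<one>\<^bsub>S\<^esub> = 1" using ia by (simp add: interior_alg_def)
    show "\<And>s t. s \<in> carrier S \<Longrightarrow> t \<in> carrier S \<Longrightarrow> \<sigma> (s \<otimes>\<^bsub>S\<^esub> t) = \<sigma> s * \<sigma> t"
      using ia by (simp add: interior_alg_def)
  qed
  interpret alg \<iota> S \<sigma> by (rule algI)
  have mx: "maximal_ideal M" using std by (simp add: standing_O_def local_ring_max_def)
  have I: "is_ideal M" and one: "(1::'o) \<notin> M" using mx by (simp_all add: maximal_ideal_def)
  have pM: "(of_nat p :: 'o) \<in> M" using std by (simp add: standing_O_def residue_char_def)
  have ihi: "inj_hom_into S P (carrier S) \<phi>" and bn: "brauer_nonzero M \<iota> S \<sigma> (Delta \<phi> P)"
    using \<phi>F by (simp_all add: FHom_def)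
  have Pc: "x \<in> P \<Longrightarrow> x \<in> carrier S" for x using P by (meson subgroup.mem_carrier)
  have \<phi>c: "x \<in> P \<Longrightarrow> \<phi> x \<in> carrier S" for x using ihi by (auto simp: inj_hom_into_def)
  have \<phi>m: "x \<in> P \<Longrightarrow> y \<in> P \<Longrightarrow> \<phi> (x \<otimes>\<^bsub>S\<^esub> y) = \<phi> x \<otimes>\<^bsub>S\<^esub> \<phi> y" for x y
    using ihi by (simp add: inj_hom_into_def)
  have P1: "\<one>\<^bsub>S\<^esub> \<in> P" using P by (rule subgroup.one_closed)
  have \<phi>1: "\<phi> \<one>\<^bsub>S\<^esub> = \<one>\<^bsub>S\<^esub>"
  proof -
    have o: "\<one>\<^bsub>S\<^esub> \<otimes>\<^bsub>S\<^esub> \<one>\<^bsub>S\<^esub> = \<one>\<^bsub>S\<^esub>" using grpS by (simp add: group.is_monoid monoid.l_one)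
    have "\<phi> \<one>\<^bsub>S\<^esub> \<otimes>\<^bsub>S\<^esub> \<phi> \<one>\<^bsub>S\<^esub> = \<phi> \<one>\<^bsub>S\<^esub>"
      using \<phi>m[OF P1 P1] o by simp
    then show ?thesis using group.l_cancel_one[OF grpS \<phi>c[OF P1] \<phi>c[OF P1]] by simp
  qed
  have \<phi>inv: "x \<in> P \<Longrightarrow> \<phi> (inv\<^bsub>S\<^esub> x) = inv\<^bsub>S\<^esub> (\<phi> x)" for x
  proof -
    assume x: "x \<in> P"
    have ix: "inv\<^bsub>S\<^esub> x \<in> P" using P x by (rule subgroup.m_inv_closed)
    have "\<phi> (inv\<^bsub>S\<^esub> x) \<otimes>\<^bsub>S\<^esub> \<phi> x = \<one>\<^bsub>S\<^esub>"
      using \<phi>m[OF ix x, symmetric] \<phi>1 grpS Pc[OF x] by (simp add: group.l_inv)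
    then show ?thesis using grpS \<phi>c[OF x] \<phi>c[OF ix] by (metis group.inv_equality)
  qed
  have Dsub: "subgroup (Delta \<phi> P) GG"
  proof
    show "Delta \<phi> P \<subseteq> carrier GG" using \<phi>c Pc by (auto simp: Delta_def)
    show "\<And>u v. u \<in> Delta \<phi> P \<Longrightarrow> v \<in> Delta \<phi> P \<Longrightarrow> u \<otimes>\<^bsub>GG\<^esub> v \<in> Delta \<phi> P"
    proof -
      fix u v assume "u \<in> Delta \<phi> P" "v \<in> Delta \<phi> P"
      then obtain x y where xy: "x \<in> P" "y \<in> P" "u = (\<phi> x, x)" "v = (\<phi> y, y)" by (auto simp: Delta_def)
      then have "u \<otimes>\<^bsub>GG\<^esub> v = (\<phi> (x \<otimes>\<^bsub>S\<^esub> y), x \<otimes>\<^bsub>S\<^esub> y)" using \<phi>m by simp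
      moreover have "x \<otimes>\<^bsub>S\<^esub> y \<in> P" using P xy by (simp add: subgroup.m_closed)
      ultimately show "u \<otimes>\<^bsub>GG\<^esub> v \<in> Delta \<phi> P" by (auto simp: Delta_def)
    qed
    show "\<one>\<^bsub>GG\<^esub> \<in> Delta \<phi> P" using P1 \<phi>1 by (auto simp: Delta_def intro!: exI[of _ "\<one>\<^bsub>S\<^esub>"])
    show "\<And>u. u \<in> Delta \<phi> P \<Longrightarrow> inv\<^bsub>GG\<^esub> u \<in> Delta \<phi> P"
    proof -
      fix u assume "u \<in> Delta \<phi> P"
      then obtain x where x: "x \<in> P" "u = (\<phi> x, x)" by (auto simp: Delta_def)
      then have "inv\<^bsub>GG\<^esub> u = (inv\<^bsub>S\<^esub> (\<phi> x), inv\<^bsub>S\<^esub> x)" using grpS \<phi>c Pc by simp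
      also have "\<dots> = (\<phi> (inv\<^bsub>S\<^esub> x), inv\<^bsub>S\<^esub> x)" using \<phi>inv[OF x(1)] by simp
      finally show "inv\<^bsub>GG\<^esub> u \<in> Delta \<phi> P" using P x by (auto simp: Delta_def subgroup.m_inv_closed)
    qed
  qed
  have YGG: "act u y \<in> Y" if u: "u \<in> carrier GG" and y: "y \<in> Y" for u y
  proof -
    obtain a b where ab: "u = (a, b)" "a \<in> carrier S" "b \<in> carrier S" using u by auto
    have ib: "inv\<^bsub>S\<^esub> b \<in> carrier S" using ab grpS by (simp add: group.inv_closed)
    have "\<sigma> a * y \<in> Y" using SSi ab y unfolding SS_invariant_def by blast
    then have "\<sigma> a * y * \<sigma> (inv\<^bsub>S\<^esub> b) \<in> Y" using SSi ib unfolding SS_invariant_def by blast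
    then show ?thesis using ab by (simp add: bact_def)
  qed
  interpret hd: halg \<iota> S \<sigma> "Delta \<phi> P" Y
    by (rule halg.intro[OF algI halg_axioms.intro[OF B Dsub]]) (use YGG Dsub in \<open>meson subgroup.mem_carrier\<close>)
  obtain y0 where y0: "y0 \<in> Y" "\<forall>u\<in>Delta \<phi> P. act u y0 = y0"
  proof (rule ccontr)
    assume "\<not> thesis"
    then have nofix: "\<not> (\<exists>y0\<in>Y. \<forall>u\<in>Delta \<phi> P. act u y0 = y0)" using that by blast
    then have F0: "hd.G.fixp (Delta \<phi> P) Y = {}" by (auto simp: hd.G.fixp_def)
    have "fixed S \<sigma> (Delta \<phi> P) \<subseteq> brauer_kernel M \<iota> S \<sigma> (Delta \<phi> P)"
    proof
      fix a assume a: "a \<in> fixed S \<sigma> (Delta \<phi> P)"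
      obtain n :: nat and V b where c: "\<forall>i<n. subgroup (V i) GG \<and> V i \<subset> Delta \<phi> P \<and> b i \<in> fixed S \<sigma> (V i)"
        and e: "a = (\<Sum>y\<in>hd.G.fixp (Delta \<phi> P) Y. \<iota> (coef \<iota> Y a y) * y) + (\<Sum>i<n. trace S \<sigma> (V i) (Delta \<phi> P) (b i))"
        using hd.decomp[OF a] by blast
      have e2: "a = 0 + (\<Sum>i<n. trace S \<sigma> (V i) (Delta \<phi> P) (b i))" using e F0 by simp
      have z: "(0::'a) \<in> mfixed M \<iota> S \<sigma> (Delta \<phi> P)"
        unfolding mfixed_def by (rule CollectI, rule exI[of _ 0]) simp
      show "a \<in> brauer_kernel M \<iota> S \<sigma> (Delta \<phi> P)"
        unfolding brauer_kernel_def using e2 z c by blast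
    qed
    then show False using bn by (simp add: brauer_nonzero_def)
  qed
  obtain w where w1: "y0 * w = 1" and w2: "w * y0 = 1" using units y0(1) unfolding unit_of_def by blast
  have comm: "\<sigma> (\<phi> x) * y0 = y0 * \<sigma> x" if x: "x \<in> P" for x
  proof -
    have "(\<phi> x, x) \<in> Delta \<phi> P" using x by (auto simp: Delta_def)
    then have "\<sigma> (\<phi> x) * y0 * \<sigma> (inv\<^bsub>S\<^esub> x) = y0" using y0(2) by (auto simp: bact_def)
    then have "\<sigma> (\<phi> x) * y0 * \<sigma> (inv\<^bsub>S\<^esub> x) * \<sigma> x = y0 * \<sigma> x" by simp
    then show ?thesis using \<sigma>_inv2[OF Pc[OF x]] by (simp add: mult.assoc)
  qed
  have comm2: "\<sigma> x * w = w * \<sigma> (\<phi> x)" if x: "x \<in> P" for x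
  proof -
    have "w * \<sigma> (\<phi> x) = w * \<sigma> (\<phi> x) * (y0 * w)" using w1 by simp
    also have "\<dots> = w * (\<sigma> (\<phi> x) * y0) * w" by (simp add: mult.assoc)
    also have "\<dots> = w * (y0 * \<sigma> x) * w" using comm[OF x] by simp
    also have "\<dots> = (w * y0) * \<sigma> x * w" by (simp add: mult.assoc)
    also have "\<dots> = \<sigma> x * w" using w2 by simp
    finally show ?thesis by simp
  qed
  define Y' where "Y' = (\<lambda>y. w * y) ` Y"
  have B': "O_basis \<iota> Y'" unfolding Y'_def by (rule basis_mult[OF B w1 w2])
  define K where "K = P \<times> carrier S"
  have Ksub: "subgroup K GG" unfolding K_def
    by (rule DirProd_subgroups[OF grpS P grpS group.subgroup_self[OF grpS]])
  have KGG: "u \<in> K \<Longrightarrow> u \<in> carrier GG" for u using Ksub by (meson subgroup.mem_carrier)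
  have actK: "act (x, s) (w * y) = w * act (\<phi> x, s) y" if "x \<in> P" for x s y
    using comm2[OF that] by (simp add: bact_def mult.assoc[symmetric])
  have Y'inv: "act u z \<in> Y'" if u: "u \<in> K" and z: "z \<in> Y'" for u z
  proof -
    obtain x s where xs: "u = (x, s)" "x \<in> P" "s \<in> carrier S" using u by (auto simp: K_def)
    obtain y where y: "y \<in> Y" "z = w * y" using z by (auto simp: Y'_def)
    have "act (\<phi> x, s) y \<in> Y" using YGG[OF _ y(1)] \<phi>c[OF xs(2)] xs(3) by simp
    then show ?thesis using actK[OF xs(2)] xs y by (auto simp: Y'_def)
  qed
  have Yinv: "act u y \<in> Y" if "u \<in> K" "y \<in> Y" for u y using YGG KGG that by blast
  have cnt: "card (gact.fixp act H Y') = card (gact.fixp act H Y)" if H: "subgroup H GG" "H \<subseteq> K" for H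
  proof -
    have h1: "halg \<iota> S \<sigma> H Y'"
      by (rule halg.intro[OF algI halg_axioms.intro[OF B' H(1)]]) (use Y'inv H in blast)
    have h2: "halg \<iota> S \<sigma> H Y"
      by (rule halg.intro[OF algI halg_axioms.intro[OF B H(1)]]) (use Yinv H in blast)
    show ?thesis using count_le[OF p fin k I one pM h1 h2] count_le[OF p fin k I one pM h2 h1] by simp
  qed
  interpret gK: gact GG K act
  proof (rule gact.intro)
    show "group GG" by (rule grpGG)
    show "subgroup K GG" by (rule Ksub)
    show "\<And>x. act \<one>\<^bsub>GG\<^esub> x = x" by (rule act_one)
    show "\<And>u v x. u \<in> K \<Longrightarrow> v \<in> K \<Longrightarrow> act (u \<otimes>\<^bsub>GG\<^esub> v) x = act u (act v x)"
      using act_mult KGG by blast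
  qed
  obtain g where g: "bij_betw g Y' Y" "\<forall>u\<in>K. \<forall>x\<in>Y'. g (act u x) = act u (g x)"
    using gK.marks[of Y' Y] finY[OF B'] finY[OF B] Y'inv Yinv cnt by blast
  have bw: "bij_betw (\<lambda>y. w * y) Y Y'"
  proof (rule bij_betw_imageI)
    show "inj_on (\<lambda>y. w * y) Y"
    proof (rule inj_onI)
      fix a b assume "w * a = w * b"
      then have "y0 * (w * a) = y0 * (w * b)" by simp
      then show "a = b" using w1 by (simp add: mult.assoc[symmetric])
    qed
    show "(\<lambda>y. w * y) ` Y = Y'" by (simp add: Y'_def)
  qed
  define f where "f y = g (w * y)" for y
  have "f = (\<lambda>y. g (w * y))" by (rule ext) (simp add: f_def)
  then have fb: "bij_betw f Y Y" using bij_betw_trans[OF bw g(1)] by (simp add: comp_def)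
  have feq: "f (\<sigma> (\<phi> x) * y * \<sigma> s) = \<sigma> x * f y * \<sigma> s" if x: "x \<in> P" and s: "s \<in> carrier S" and y: "y \<in> Y" for x s y
  proof -
    have is1: "inv\<^bsub>S\<^esub> s \<in> carrier S" using s grpS by (simp add: group.inv_closed)
    have iis: "inv\<^bsub>S\<^esub> (inv\<^bsub>S\<^esub> s) = s" using s grpS by (simp add: group.inv_inv)
    have uK: "(x, inv\<^bsub>S\<^esub> s) \<in> K" using x is1 by (simp add: K_def)
    have "w * (\<sigma> (\<phi> x) * y * \<sigma> s) = act (x, inv\<^bsub>S\<^esub> s) (w * y)"
      using actK[OF x, of "inv\<^bsub>S\<^esub> s" y] iis by (simp add: bact_def mult.assoc)
    then have "f (\<sigma> (\<phi> x) * y * \<sigma> s) = g (act (x, inv\<^bsub>S\<^esub> s) (w * y))" by (simp add: f_def)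
    also have "\<dots> = act (x, inv\<^bsub>S\<^esub> s) (g (w * y))" using g(2) uK y by (auto simp: Y'_def)
    also have "\<dots> = \<sigma> x * f y * \<sigma> s" using iis by (simp add: bact_def f_def)
    finally show ?thesis .
  qed
  show "twisted_biset_iso S \<sigma> Y P \<phi>" unfolding twisted_biset_iso_def using fb feq by blast
qed

end
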